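(* Let $(G,\eta\colon M\otimes G\to G)$ be an initial algebra of the endofunctor $M\otimes-$ on $\mathsf{SquaMS}$, let $Q=C(G)$ be its Cauchy completion, and let $\gamma\colon Q\to M\otimes Q$ be the composite of $C(\eta^{-1})\colon C(G)\to C(M\otimes G)$ with the canonical isometric isomorphism $C(M\otimes G)\cong M\otimes C(G)$. Then the metric space $Q$ is bilipschitz equivalent to the Sierpinski carpet $\mathbb{S}$, viewed as a subset of the plane with the taxicab metric, and thus also with the Euclidean metric.
   Context: Let $M_0=\{(r,s)\in[0,1]^2: r\in\{0,1\}\text{ or } s\in\{0,1\}\}$ be the boundary of the unit square. A square metric space is a pair $(X,S_X)$ where $X$ is a metric space with all distances at most $2$ and $S_X\colon M_0\to X$ is injective, such that (sq1) for $i\in\{0,1\}$ and $r,s\in[0,1]$, $d_X(S_X(i,r),S_X(i,s))=|s-r|$ and $d_X(S_X(r,i),S_X(s,i))=|s-r|$; (sq2) for all $(r,s),(t,u)\in M_0$, $d_X(S_X(r,s),S_X(t,u))\ge |r-t|+|s-u|$. $\mathsf{SquaMS}$ is the category of square metric spaces whose morphisms are short (non-expanding) maps $f\colon X\to Y$ with $f\circ S_X=S_Y$. Let $N=\{0,1,2\}^2$ and $M=N\setminus\{(1,1)\}$, elements viewed also as points of $\mathbb{R}^2$. For $X$ in $\mathsf{SquaMS}$, let $\sim$ be the equivalence relation on $M\times X$ generated by $(m,S_X(p))\sim(n,S_X(q))$ whenever $m,n\in M$ differ by exactly $1$ in exactly one coordinate and $(m+p)/3=(n+q)/3$ in $\mathbb{R}^2$.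 Then $M\otimes X=(M\times X)/\!\sim$, with $m\otimes x$ the class of $(m,x)$. On $M\times X$ put $d((a,u),(b,v))=\frac13 d_X(u,v)$ if $a=b$ and $2$ otherwise; the metric on $M\otimes X$ is the quotient metric: $d(m\otimes x,n\otimes y)$ is the infimum, over finite sequences $(m,x)=z_0,z_1,\dots,z_k=(n,y)$ in $M\times X$, of the sum over consecutive pairs of $0$ if the pair is $\sim$-related and of $d(z_i,z_{i+1})$ otherwise. $S_{M\otimes X}(p)=m\otimes S_X(3p-m)$ for any $m\in M$ with $p\in (m+[0,1]^2)/3$, and for a morphism $f$, $(M\otimes f)(m\otimes x)=m\otimes f(x)$; this defines an endofunctor $M\otimes-$ of $\mathsf{SquaMS}$. Cauchy completion $C(X)$: Cauchy sequences modulo equivalence, $d((x_i),(y_i))=\lim d_X(x_i,y_i)$, with $S_{C(X)}(p)$ the class of the constant sequence $S_X(p)$. The Sierpinski carpet $\mathbb{S}$ is the unique nonempty compact subset $K$ of $[0,1]^2$ with $K=\bigcup_{m\in M}\frac13(m+K)$. Two metric spaces $A,B$ are bilipschitz equivalent if there is a bijection $f\colon A\to B$ and $K\ge1$ with $\frac1K d_A(x,y)\le d_B(f(x),f(y))\le K d_A(x,y)$ for all $x,y$. *)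

theory Defs
  imports "HOL-Analysis.Analysis"
begin

definition M0 :: "(real \<times> real) set" where
  "M0 = {(r, s). r \<in> {0..1} \<and> s \<in> {0..1} \<and> (r \<in> {0, 1} \<or> s \<in> {0, 1})}"

type_synonym 'a squams = "'a set \<times> ('a \<Rightarrow> 'a \<Rightarrow> real) \<times> (real \<times> real \<Rightarrow> 'a)"

definition carr :: "'a squams \<Rightarrow> 'a set" where "carr X = fst X"
definition dst :: "'a squams \<Rightarrow> 'a \<Rightarrow> 'a \<Rightarrow> real" where "dst X = fst (snd X)"
definition sqm :: "'a squams \<Rightarrow> real \<times> real \<Rightarrow> 'a" where "sqm X = snd (snd X)"

definition is_squams :: "'a squams \<Rightarrow> bool" where
  "is_squams X \<longleftrightarrow>
     Metric_space (carr X) (dst X) \<and>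
     (\<forall>x\<in>carr X. \<forall>y\<in>carr X. dst X x y \<le> 2) \<and>
     sqm X ` M0 \<subseteq> carr X \<and> inj_on (sqm X) M0 \<and>
     (\<forall>i\<in>{0,1}. \<forall>r\<in>{0..1}. \<forall>s\<in>{0..1}.
        dst X (sqm X (i, r)) (sqm X (i, s)) = \<bar>s - r\<bar> \<and>
        dst X (sqm X (r, i)) (sqm X (s, i)) = \<bar>s - r\<bar>) \<and>
     (\<forall>(r, s)\<in>M0. \<forall>(t, u)\<in>M0.
        dst X (sqm X (r, s)) (sqm X (t, u)) \<ge> \<bar>r - t\<bar> + \<bar>s - u\<bar>)"

definition is_mor :: "'a squams \<Rightarrow> 'b squams \<Rightarrow> ('a \<Rightarrow> 'b) \<Rightarrow> bool" where
  "is_mor X Y f \<longleftrightarrow>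
     f ` carr X \<subseteq> carr Y \<and>
     (\<forall>x\<in>carr X. \<forall>y\<in>carr X. dst Y (f x) (f y) \<le> dst X x y) \<and>
     (\<forall>p\<in>M0. f (sqm X p) = sqm Y p)"

definition Mset :: "(nat \<times> nat) set" where
  "Mset = ({0, 1, 2} \<times> {0, 1, 2}) - {(1, 1)}"

definition adjacent :: "nat \<times> nat \<Rightarrow> nat \<times> nat \<Rightarrow> bool" where
  "adjacent m n \<longleftrightarrow>
     (fst m = fst n \<and> \<bar>real (snd m) - real (snd n)\<bar> = 1) \<or>
     (snd m = snd n \<and> \<bar>real (fst m) - real (fst n)\<bar> = 1)"

definition glue_gen :: "'a squams \<Rightarrow> (nat \<times> nat) \<times> 'a \<Rightarrow> (nat \<times> nat) \<times> 'a \<Rightarrow> bool" where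
  "glue_gen X a b \<longleftrightarrow>
     fst a \<in> Mset \<and> fst b \<in> Mset \<and> adjacent (fst a) (fst b) \<and>
     (\<exists>p\<in>M0. \<exists>q\<in>M0. snd a = sqm X p \<and> snd b = sqm X q \<and>
        (real (fst (fst a)) + fst p) / 3 = (real (fst (fst b)) + fst q) / 3 \<and>
        (real (snd (fst a)) + snd p) / 3 = (real (snd (fst b)) + snd q) / 3)"

definition glue_rel :: "'a squams \<Rightarrow> (((nat \<times> nat) \<times> 'a) \<times> ((nat \<times> nat) \<times> 'a)) set" where
  "glue_rel X = {(a, b). a \<in> Mset \<times> carr X \<and> b \<in> Mset \<times> carr X \<and> equivclp (glue_gen X) a b}"

definition tcls :: "'a squams \<Rightarrow> nat \<times> nat \<Rightarrow> 'a \<Rightarrow> ((nat \<times> nat) \<times> 'a) set" where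
  "tcls X m x = glue_rel X `` {(m, x)}"

definition dMX :: "'a squams \<Rightarrow> (nat \<times> nat) \<times> 'a \<Rightarrow> (nat \<times> nat) \<times> 'a \<Rightarrow> real" where
  "dMX X a b = (if fst a = fst b then dst X (snd a) (snd b) / 3 else 2)"

definition chain_cost :: "'a squams \<Rightarrow> ((nat \<times> nat) \<times> 'a) list \<Rightarrow> real" where
  "chain_cost X zs =
     sum_list (map (\<lambda>(a, b). if (a, b) \<in> glue_rel X then 0 else dMX X a b) (zip zs (tl zs)))"

definition tdist :: "'a squams \<Rightarrow> ((nat \<times> nat) \<times> 'a) set \<Rightarrow> ((nat \<times> nat) \<times> 'a) set \<Rightarrow> real" where
  "tdist X P Q = Inf {chain_cost X zs | zs. zs \<noteq> [] \<and> set zs \<subseteq> Mset \<times> carr X \<and>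
                                        hd zs \<in> P \<and> last zs \<in> Q}"

definition subsq :: "nat \<times> nat \<Rightarrow> (real \<times> real) set" where
  "subsq m = {((real (fst m) + x) / 3, (real (snd m) + y) / 3) | x y. x \<in> {0..1} \<and> y \<in> {0..1}}"

definition tS :: "'a squams \<Rightarrow> real \<times> real \<Rightarrow> ((nat \<times> nat) \<times> 'a) set" where
  "tS X p = (let m = (SOME m. m \<in> Mset \<and> p \<in> subsq m) in
               tcls X m (sqm X (3 * fst p - real (fst m), 3 * snd p - real (snd m))))"

definition tensor :: "'a squams \<Rightarrow> ((nat \<times> nat) \<times> 'a) set squams" where
  "tensor X = ((Mset \<times> carr X) // glue_rel X, tdist X, tS X)"

definition tensor_map :: "'a squams \<Rightarrow> 'b squams \<Rightarrow> ('a \<Rightarrow> 'b)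
      \<Rightarrow> ((nat \<times> nat) \<times> 'a) set \<Rightarrow> ((nat \<times> nat) \<times> 'b) set" where
  "tensor_map X Y f c = (let z = (SOME z. z \<in> c) in tcls Y (fst z) (f (snd z)))"

definition is_alg :: "'a squams \<Rightarrow> (((nat \<times> nat) \<times> 'a) set \<Rightarrow> 'a) \<Rightarrow> bool" where
  "is_alg X \<alpha> \<longleftrightarrow> is_squams X \<and> is_mor (tensor X) X \<alpha>"

definition is_alg_mor :: "'a squams \<Rightarrow> (((nat \<times> nat) \<times> 'a) set \<Rightarrow> 'a)
      \<Rightarrow> 'b squams \<Rightarrow> (((nat \<times> nat) \<times> 'b) set \<Rightarrow> 'b) \<Rightarrow> ('a \<Rightarrow> 'b) \<Rightarrow> bool" where
  "is_alg_mor X \<alpha> Y \<beta> h \<longleftrightarrow> is_mor X Y h \<and>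
     (\<forall>c\<in>carr (tensor X). h (\<alpha> c) = \<beta> (tensor_map X Y h c))"

text \<open>Initial algebra; the test algebras range over all square metric spaces whose carrier
  is a subset of the type of G. Uniqueness is on the carrier.\<close>
definition is_initial_alg :: "'a squams \<Rightarrow> (((nat \<times> nat) \<times> 'a) set \<Rightarrow> 'a) \<Rightarrow> bool" where
  "is_initial_alg G \<eta> \<longleftrightarrow> is_alg G \<eta> \<and>
     (\<forall>(X :: 'a squams) \<alpha>. is_alg X \<alpha> \<longrightarrow>
        (\<exists>h. is_alg_mor G \<eta> X \<alpha> h \<and>
             (\<forall>h'. is_alg_mor G \<eta> X \<alpha> h' \<longrightarrow> (\<forall>x\<in>carr G. h' x = h x))))"

definition cauchy_eqv :: "'a squams \<Rightarrow> ((nat \<Rightarrow> 'a) \<times> (nat \<Rightarrow> 'a)) set" where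
  "cauchy_eqv X = {(x, y). Metric_space.MCauchy (carr X) (dst X) x \<and>
                          Metric_space.MCauchy (carr X) (dst X) y \<and>
                          (\<lambda>n. dst X (x n) (y n)) \<longlonglongrightarrow> 0}"

definition compl_carr :: "'a squams \<Rightarrow> (nat \<Rightarrow> 'a) set set" where
  "compl_carr X = {x. Metric_space.MCauchy (carr X) (dst X) x} // cauchy_eqv X"

definition compl_dist :: "'a squams \<Rightarrow> (nat \<Rightarrow> 'a) set \<Rightarrow> (nat \<Rightarrow> 'a) set \<Rightarrow> real" where
  "compl_dist X P Q = lim (\<lambda>n. dst X ((SOME x. x \<in> P) n) ((SOME y. y \<in> Q) n))"

definition compl_S :: "'a squams \<Rightarrow> real \<times> real \<Rightarrow> (nat \<Rightarrow> 'a) set" where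
  "compl_S X p = cauchy_eqv X `` {(\<lambda>_. sqm X p)}"

definition cauchy_completion :: "'a squams \<Rightarrow> (nat \<Rightarrow> 'a) set squams" where
  "cauchy_completion X = (compl_carr X, compl_dist X, compl_S X)"

definition carpet :: "(real \<times> real) set" where
  "carpet = (THE K. K \<noteq> {} \<and> compact K \<and> K \<subseteq> {0..1} \<times> {0..1} \<and>
      K = (\<Union>m\<in>Mset. (\<lambda>(x, y). ((real (fst m) + x) / 3, (real (snd m) + y) / 3)) ` K))"

definition taxicab :: "real \<times> real \<Rightarrow> real \<times> real \<Rightarrow> real" where
  "taxicab p q = \<bar>fst p - fst q\<bar> + \<bar>snd p - snd q\<bar>"

definition bilipschitz_equiv :: "'a set \<Rightarrow> ('a \<Rightarrow> 'a \<Rightarrow> real) \<Rightarrow> 'b set \<Rightarrow> ('b \<Rightarrow> 'b \<Rightarrow> real) \<Rightarrow> bool" where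
  "bilipschitz_equiv A dA B dB \<longleftrightarrow>
     (\<exists>f K. bij_betw f A B \<and> K \<ge> 1 \<and>
        (\<forall>x\<in>A. \<forall>y\<in>A. dA x y / K \<le> dB (f x) (f y) \<and> dB (f x) (f y) \<le> K * dA x y))"

end

theory Submission
  imports Defs
begin

lemma M0_iff: "p \<in> M0 \<longleftrightarrow> fst p \<in> {0..1} \<and> snd p \<in> {0..1} \<and> (fst p \<in> {0,1} \<or> snd p \<in> {0,1})"
  by (cases p) (auto simp: M0_def)

lemma Mset_iff: "m \<in> Mset \<longleftrightarrow> fst m \<le> 2 \<and> snd m \<le> 2 \<and> m \<noteq> (1,1)"
proof (cases m)
  case (Pair a b)
  have "a \<le> 2 \<longleftrightarrow> a \<in> {0,1,2}" for a :: nat by auto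
  then show ?thesis using Pair by (auto simp: Mset_def)
qed

lemma finite_Mset: "finite Mset"
  by (simp add: Mset_def)

lemma carr_tensor: "carr (tensor X) = (Mset \<times> carr X) // glue_rel X"
  by (simp add: tensor_def carr_def)
lemma dst_tensor: "dst (tensor X) = tdist X"
  by (simp add: tensor_def dst_def)
lemma sqm_tensor: "sqm (tensor X) = tS X"
  by (simp add: tensor_def sqm_def)

lemma equiv_glue: "equiv (Mset \<times> carr X) (glue_rel X)"
proof (rule equivI)
  show "refl_on (Mset \<times> carr X) (glue_rel X)"
    unfolding refl_on_def glue_rel_def by auto
  show "glue_rel X \<subseteq> (Mset \<times> carr X) \<times> Mset \<times> carr X" unfolding glue_rel_def by auto
  show "sym (glue_rel X)"
    unfolding sym_def glue_rel_def by (auto intro: equivclp_sym)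
  show "trans (glue_rel X)"
    unfolding trans_def glue_rel_def by (auto intro: equivclp_trans)
qed

lemma equivclp_inv:
  assumes "equivclp R a b" "\<And>x y. R x y \<Longrightarrow> f x = f y"
  shows "f a = f b"
  using assms(1) by induct (auto dest: assms(2))

lemma equivclp_cases_gen: "equivclp R a b \<Longrightarrow> a = b \<or> (\<exists>c. R b c \<or> R c b)"
  by (induct rule: equivclp_induct) auto

lemma glue_gen_D: "glue_gen X a b \<Longrightarrow> fst a \<in> Mset \<and> fst b \<in> Mset \<and> snd a \<in> sqm X ` M0 \<and> snd b \<in> sqm X ` M0"
  unfolding glue_gen_def by auto

lemma glue_rel_D:
  assumes "(a, b) \<in> glue_rel X"
  shows "a \<in> Mset \<times> carr X" "b \<in> Mset \<times> carr X" "a = b \<or> snd b \<in> sqm X ` M0"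
proof -
  show "a \<in> Mset \<times> carr X" "b \<in> Mset \<times> carr X" using assms unfolding glue_rel_def by auto
  have "equivclp (glue_gen X) a b" using assms unfolding glue_rel_def by auto
  from equivclp_cases_gen[OF this] obtain c where "a = b \<or> glue_gen X b c \<or> glue_gen X c b" by blast
  then show "a = b \<or> snd b \<in> sqm X ` M0" using glue_gen_D[of X b c] glue_gen_D[of X c b] by blast
qed

lemma tcls_in: "m \<in> Mset \<Longrightarrow> x \<in> carr X \<Longrightarrow> tcls X m x \<in> carr (tensor X)"
  unfolding carr_tensor tcls_def by (intro quotientI) auto

lemma tcls_self: "m \<in> Mset \<Longrightarrow> x \<in> carr X \<Longrightarrow> (m, x) \<in> tcls X m x"
  unfolding tcls_def glue_rel_def by auto

lemma tensor_carrE: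
  assumes "c \<in> carr (tensor X)"
  obtains m x where "m \<in> Mset" "x \<in> carr X" "c = tcls X m x"
  using assms unfolding carr_tensor tcls_def by (auto elim!: quotientE)

lemma tcls_mem_eq:
  assumes "c \<in> carr (tensor X)" "z \<in> c"
  shows "c = tcls X (fst z) (snd z)" "fst z \<in> Mset" "snd z \<in> carr X"
proof -
  have eq: "equiv (Mset \<times> carr X) (glue_rel X)" by (rule equiv_glue)
  obtain m x where mx: "m \<in> Mset" "x \<in> carr X" "c = tcls X m x"
    using assms(1) by (rule tensor_carrE)
  have zr: "((m, x), z) \<in> glue_rel X" using assms(2) mx unfolding tcls_def by auto
  then show "fst z \<in> Mset" "snd z \<in> carr X" using glue_rel_D(2)[OF zr] by auto
  have "glue_rel X `` {z} = glue_rel X `` {(m,x)}"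
    using zr eq by (metis equiv_class_eq_iff prod.collapse)
  then show "c = tcls X (fst z) (snd z)" using mx unfolding tcls_def by simp
qed

lemma tcls_eqI:
  assumes "equivclp (glue_gen X) (m, x) (n, y)" "m \<in> Mset" "n \<in> Mset" "x \<in> carr X" "y \<in> carr X"
  shows "tcls X m x = tcls X n y"
proof -
  have "((m, x), (n, y)) \<in> glue_rel X" using assms unfolding glue_rel_def by auto
  then show ?thesis unfolding tcls_def
    by (metis equiv_class_eq_iff equiv_glue)
qed

lemma tcls_some:
  assumes "m \<in> Mset" "x \<in> carr X"
  shows "(SOME z. z \<in> tcls X m x) \<in> tcls X m x"
  using tcls_self[OF assms] by (rule someI)

lemma class_inv:
  assumes inv: "\<And>a b. glue_gen X a b \<Longrightarrow> f a = f b"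
    and z: "z \<in> tcls X m x"
  shows "f z = f (m, x)"
proof -
  have "equivclp (glue_gen X) (m, x) z" using z unfolding tcls_def glue_rel_def by auto
  then show ?thesis using equivclp_inv[of "glue_gen X" "(m,x)" z f] inv by metis
qed


definition U :: "(real \<times> real) set" where "U = {0..1} \<times> {0..1}"

lemma U_iff: "p \<in> U \<longleftrightarrow> fst p \<in> {0..1} \<and> snd p \<in> {0..1}"
  by (cases p) (auto simp: U_def)

lemma M0_U: "M0 \<subseteq> U"
  by (auto simp: M0_iff U_iff)

lemma taxicab_commute: "taxicab p q = taxicab q p"
  by (simp add: taxicab_def abs_minus_commute)
lemma taxicab_nonneg: "0 \<le> taxicab p q"
  by (simp add: taxicab_def)
lemma taxicab_zero: "taxicab p q = 0 \<longleftrightarrow> p = q"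
  by (cases p; cases q) (auto simp: taxicab_def)
lemma taxicab_triangle: "taxicab p r \<le> taxicab p q + taxicab q r"
  by (simp add: taxicab_def)
lemma taxicab_U: "p \<in> U \<Longrightarrow> q \<in> U \<Longrightarrow> taxicab p q \<le> 2"
  by (auto simp: taxicab_def U_iff abs_le_iff)

lemma dist_le_taxicab: "dist p q \<le> taxicab p q"
proof -
  have "dist p q = sqrt ((dist (fst p) (fst q))\<^sup>2 + (dist (snd p) (snd q))\<^sup>2)"
    by (cases p; cases q) (simp add: dist_Pair_Pair)
  also have "\<dots> \<le> dist (fst p) (fst q) + dist (snd p) (snd q)"
    by (rule real_sqrt_sum_squares_triangle_ineq[where a=0 and c=0, simplified]
        | rule sqrt_sum_squares_le_sum_abs[THEN order_trans]; simp)
  finally show ?thesis by (simp add: taxicab_def dist_real_def)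
qed

lemma taxicab_le_dist: "taxicab p q \<le> 2 * dist p q"
proof -
  have "dist p q = sqrt ((dist (fst p) (fst q))\<^sup>2 + (dist (snd p) (snd q))\<^sup>2)"
    by (cases p; cases q) (simp add: dist_Pair_Pair)
  moreover have "a \<le> sqrt (a\<^sup>2 + b\<^sup>2)" "b \<le> sqrt (a\<^sup>2 + b\<^sup>2)" if "a \<ge> 0" "b \<ge> 0" for a b :: real
    using that by (auto intro!: real_le_rsqrt)
  ultimately show ?thesis unfolding taxicab_def
    by (smt (verit) dist_real_def zero_le_dist)
qed

lemma subsq_iff: "p \<in> subsq m \<longleftrightarrow> 3 * fst p - real (fst m) \<in> {0..1} \<and> 3 * snd p - real (snd m) \<in> {0..1}"
proof
  assume "p \<in> subsq m" then show "3 * fst p - real (fst m) \<in> {0..1} \<and> 3 * snd p - real (snd m) \<in> {0..1}"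
    by (auto simp: subsq_def field_simps)
next
  assume a: "3 * fst p - real (fst m) \<in> {0..1} \<and> 3 * snd p - real (snd m) \<in> {0..1}"
  show "p \<in> subsq m" unfolding subsq_def
    apply (rule CollectI, rule exI[of _ "3 * fst p - real (fst m)"], rule exI[of _ "3 * snd p - real (snd m)"])
    using a by (cases p) auto
qed

lemma M0_subsq_ex: assumes "p \<in> M0" shows "\<exists>m\<in>Mset. p \<in> subsq m"
proof -
  define f where "f t = (if t < 1/3 then 0 else if t < 2/3 then 1 else (2::nat))" for t :: real
  have p: "fst p \<in> {0..1}" "snd p \<in> {0..1}" "fst p \<in> {0,1} \<or> snd p \<in> {0,1}" using assms by (auto simp: M0_iff)
  have f: "t \<in> {0..1} \<Longrightarrow> 3 * t - real (f t) \<in> {0..1}" for t by (auto simp: f_def)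
  have "(f (fst p), f (snd p)) \<noteq> (1,1)" using p by (auto simp: f_def split: if_splits)
  moreover have "f t \<le> 2" for t by (simp add: f_def)
  ultimately have "(f (fst p), f (snd p)) \<in> Mset" by (simp add: Mset_iff)
  moreover have "p \<in> subsq (f (fst p), f (snd p))" using f p by (simp add: subsq_iff)
  ultimately show ?thesis by blast
qed

lemma M0_subsq_M0:
  assumes "p \<in> M0" "m \<in> Mset" "p \<in> subsq m"
  shows "(3 * fst p - real (fst m), 3 * snd p - real (snd m)) \<in> M0"
proof -
  have m: "real (fst m) \<le> 2" "real (snd m) \<le> 2" using assms(2) by (auto simp: Mset_iff)
  have s: "3 * fst p - real (fst m) \<in> {0..1}" "3 * snd p - real (snd m) \<in> {0..1}" using assms(3) by (auto simp: subsq_iff)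
  have "fst p \<in> {0,1} \<or> snd p \<in> {0,1}" using assms(1) by (auto simp: M0_iff)
  then have "3 * fst p - real (fst m) \<in> {0,1} \<or> 3 * snd p - real (snd m) \<in> {0,1}"
    using m s by auto
  then show ?thesis using s by (auto simp: M0_iff)
qed

lemma Mset_le: "m \<in> Mset \<Longrightarrow> real (fst m) \<le> 2 \<and> real (snd m) \<le> 2"
  by (auto simp: Mset_iff)

section \<open>The test algebra built from an injection of the unit square\<close>

definition Xe :: "(real \<times> real \<Rightarrow> 'a) \<Rightarrow> 'a squams" where
  "Xe e = (e ` U, \<lambda>a b. taxicab (inv_into U e a) (inv_into U e b), e)"

definition vale :: "(real \<times> real \<Rightarrow> 'a) \<Rightarrow> (nat \<times> nat) \<times> 'a \<Rightarrow> real \<times> real" where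
  "vale e z = ((real (fst (fst z)) + fst (inv_into U e (snd z))) / 3,
               (real (snd (fst z)) + snd (inv_into U e (snd z))) / 3)"

definition alphae :: "(real \<times> real \<Rightarrow> 'a) \<Rightarrow> ((nat \<times> nat) \<times> 'a) set \<Rightarrow> 'a" where
  "alphae e c = e (vale e (SOME z. z \<in> c))"

lemma Xe_simps: "carr (Xe e) = e ` U" "dst (Xe e) = (\<lambda>a b. taxicab (inv_into U e a) (inv_into U e b))"
  "sqm (Xe e) = e"
  by (simp_all add: Xe_def carr_def dst_def sqm_def)

context
  fixes e :: "real \<times> real \<Rightarrow> 'a"
  assumes inj: "inj_on e U"
begin

lemma inv_e: "p \<in> U \<Longrightarrow> inv_into U e (e p) = p"
  using inj by (simp add: inv_into_f_f)

lemma inv_in: "a \<in> e ` U \<Longrightarrow> inv_into U e a \<in> U \<and> e (inv_into U e a) = a"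
  by (simp add: inv_into_into f_inv_into_f)

lemma Xe_squams: "is_squams (Xe e)"
  unfolding is_squams_def Xe_simps
proof (intro conjI)
  show "Metric_space (e ` U) (\<lambda>a b. taxicab (inv_into U e a) (inv_into U e b))"
  proof
    fix x y z
    show "0 \<le> taxicab (inv_into U e x) (inv_into U e y)" by (rule taxicab_nonneg)
    show "taxicab (inv_into U e x) (inv_into U e y) = taxicab (inv_into U e y) (inv_into U e x)"
      by (rule taxicab_commute)
    show "taxicab (inv_into U e x) (inv_into U e z) \<le> taxicab (inv_into U e x) (inv_into U e y) + taxicab (inv_into U e y) (inv_into U e z)"
      by (rule taxicab_triangle)
    assume "x \<in> e ` U" "y \<in> e ` U"
    then show "(taxicab (inv_into U e x) (inv_into U e y) = 0) = (x = y)"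
      using inv_in[of x] inv_in[of y] by (metis taxicab_zero)
  qed
  show "\<forall>x\<in>e ` U. \<forall>y\<in>e ` U. taxicab (inv_into U e x) (inv_into U e y) \<le> 2"
    by (auto simp: inv_e taxicab_U)
  show "e ` M0 \<subseteq> e ` U" using M0_U by auto
  show "inj_on e M0" using inj M0_U inj_on_subset by blast
  show "\<forall>i\<in>{0, 1}. \<forall>r\<in>{0..1}. \<forall>s\<in>{0..1}.
       taxicab (inv_into U e (e (i, r))) (inv_into U e (e (i, s))) = \<bar>s - r\<bar> \<and>
       taxicab (inv_into U e (e (r, i))) (inv_into U e (e (s, i))) = \<bar>s - r\<bar>"
    by (auto simp: inv_e U_iff taxicab_def)
  show "\<forall>(r, s)\<in>M0. \<forall>(t, u)\<in>M0. \<bar>r - t\<bar> + \<bar>s - u\<bar> \<le> taxicab (inv_into U e (e (r, s))) (inv_into U e (e (t, u)))"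
    using M0_U by (auto simp: inv_e[OF subsetD[OF M0_U]] taxicab_def)
qed

lemma vale_inv: "glue_gen (Xe e) a b \<Longrightarrow> vale e a = vale e b"
  unfolding glue_gen_def Xe_simps vale_def using M0_U
  by (auto simp: inv_e[OF subsetD[OF M0_U]])

lemma vale_U: "fst z \<in> Mset \<Longrightarrow> snd z \<in> e ` U \<Longrightarrow> vale e z \<in> U"
  using inv_in[of "snd z"] Mset_le[of "fst z"] by (auto simp: vale_def U_iff)

lemma vale_class: "c \<in> carr (tensor (Xe e)) \<Longrightarrow> z \<in> c \<Longrightarrow> vale e z = vale e (SOME z. z \<in> c)"
proof -
  assume c: "c \<in> carr (tensor (Xe e))" and z: "z \<in> c"
  obtain m x where mx: "m \<in> Mset" "x \<in> carr (Xe e)" "c = tcls (Xe e) m x" using c by (rule tensor_carrE)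
  have s: "(SOME z. z \<in> c) \<in> c" using z by (rule someI)
  show ?thesis using class_inv[of "Xe e" "vale e", OF vale_inv] z s mx by metis
qed

lemma chain_cost_ge:
  "zs \<noteq> [] \<Longrightarrow> set zs \<subseteq> Mset \<times> e ` U \<Longrightarrow> taxicab (vale e (hd zs)) (vale e (last zs)) \<le> chain_cost (Xe e) zs"
proof (induction zs rule: induct_list012)
  case 1 then show ?case by simp
next
  case (2 x) then show ?case by (simp add: chain_cost_def taxicab_def)
next
  case (3 x y zs)
  have IH: "taxicab (vale e y) (vale e (last (y # zs))) \<le> chain_cost (Xe e) (y # zs)"
    using 3 by simp
  have cc: "chain_cost (Xe e) (x # y # zs) = (if (x, y) \<in> glue_rel (Xe e) then 0 else dMX (Xe e) x y) + chain_cost (Xe e) (y # zs)"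
    by (simp add: chain_cost_def)
  have xy: "x \<in> Mset \<times> e ` U" "y \<in> Mset \<times> e ` U" using 3 by auto
  have step: "taxicab (vale e x) (vale e y) \<le> (if (x, y) \<in> glue_rel (Xe e) then 0 else dMX (Xe e) x y)"
  proof (cases "(x, y) \<in> glue_rel (Xe e)")
    case True
    then have "equivclp (glue_gen (Xe e)) x y" unfolding glue_rel_def by auto
    then have "vale e x = vale e y" using equivclp_inv[of _ x y "vale e"] vale_inv by metis
    then show ?thesis using True by (simp add: taxicab_def)
  next
    case False
    show ?thesis
    proof (cases "fst x = fst y")
      case True
      then show ?thesis using False
        by (simp add: dMX_def Xe_simps vale_def taxicab_def add_divide_distrib[symmetric] diff_divide_distrib[symmetric])
    next
      case F2: False
      have "taxicab (vale e x) (vale e y) \<le> 2" using vale_U xy by (intro taxicab_U) auto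
      then show ?thesis using False F2 by (simp add: dMX_def)
    qed
  qed
  define w where "w = (if (x, y) \<in> glue_rel (Xe e) then 0 else dMX (Xe e) x y)"
  have "taxicab (vale e x) (vale e (last (y # zs))) \<le> chain_cost (Xe e) (x # y # zs)"
    using IH step cc taxicab_triangle[of "vale e x" "vale e (last (y # zs))" "vale e y"]
    unfolding w_def[symmetric] by linarith
  then show ?case by simp
qed

lemma alphae_tcls: "m \<in> Mset \<Longrightarrow> p \<in> U \<Longrightarrow> alphae e (tcls (Xe e) m (e p)) = e (vale e (m, e p))"
  unfolding alphae_def
  using vale_class[of "tcls (Xe e) m (e p)" "(m, e p)"] tcls_in[of m "e p" "Xe e"] tcls_self[of m "e p" "Xe e"]
  by (simp add: Xe_simps)

lemma Xe_alg: "is_alg (Xe e) (alphae e)"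
  unfolding is_alg_def
proof (intro conjI Xe_squams)
  show "is_mor (tensor (Xe e)) (Xe e) (alphae e)"
    unfolding is_mor_def
  proof (intro conjI ballI)
    show "alphae e ` carr (tensor (Xe e)) \<subseteq> carr (Xe e)"
    proof
      fix a assume "a \<in> alphae e ` carr (tensor (Xe e))"
      then obtain c where c: "c \<in> carr (tensor (Xe e))" "a = alphae e c" by auto
      obtain m x where mx: "m \<in> Mset" "x \<in> carr (Xe e)" "c = tcls (Xe e) m x" using c(1) by (rule tensor_carrE)
      have "(SOME z. z \<in> c) \<in> c" using tcls_self[OF mx(1,2)] mx(3) by (metis someI)
      then have "fst (SOME z. z \<in> c) \<in> Mset" "snd (SOME z. z \<in> c) \<in> e ` U"
        using tcls_mem_eq[OF c(1)] by (auto simp: Xe_simps)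
      then show "a \<in> carr (Xe e)" using c vale_U by (auto simp: alphae_def Xe_simps)
    qed
  next
    fix c c' assume c: "c \<in> carr (tensor (Xe e))" and c': "c' \<in> carr (tensor (Xe e))"
    define v where "v = vale e (SOME z. z \<in> c)"
    define v' where "v' = vale e (SOME z. z \<in> c')"
    obtain m x where mx: "m \<in> Mset" "x \<in> carr (Xe e)" "c = tcls (Xe e) m x" using c by (rule tensor_carrE)
    obtain m' x' where mx': "m' \<in> Mset" "x' \<in> carr (Xe e)" "c' = tcls (Xe e) m' x'" using c' by (rule tensor_carrE)
    have "(SOME z. z \<in> c) \<in> c" using tcls_self[OF mx(1,2)] mx(3) by (metis someI)
    then have vU: "v \<in> U" using tcls_mem_eq[OF c] vale_U by (auto simp: v_def Xe_simps)
    have "(SOME z. z \<in> c') \<in> c'" using tcls_self[OF mx'(1,2)] mx'(3) by (metis someI)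
    then have vU': "v' \<in> U" using tcls_mem_eq[OF c'] vale_U by (auto simp: v'_def Xe_simps)
    have lhs: "dst (Xe e) (alphae e c) (alphae e c') = taxicab v v'"
      using vU vU' by (simp add: Xe_simps alphae_def v_def v'_def inv_e)
    let ?A = "{chain_cost (Xe e) zs |zs. zs \<noteq> [] \<and> set zs \<subseteq> Mset \<times> carr (Xe e) \<and> hd zs \<in> c \<and> last zs \<in> c'}"
    have ne: "?A \<noteq> {}"
    proof -
      have "[(m, x), (m', x')] \<noteq> [] \<and> set [(m, x), (m', x')] \<subseteq> Mset \<times> carr (Xe e) \<and> hd [(m, x), (m', x')] \<in> c \<and> last [(m, x), (m', x')] \<in> c'"
        using mx mx' tcls_self[OF mx(1,2)] tcls_self[OF mx'(1,2)] by auto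
      then show ?thesis by blast
    qed
    have "taxicab v v' \<le> Inf ?A"
    proof (rule cInf_greatest[OF ne])
      fix a assume "a \<in> ?A"
      then obtain zs where zs: "a = chain_cost (Xe e) zs" "zs \<noteq> []" "set zs \<subseteq> Mset \<times> carr (Xe e)" "hd zs \<in> c" "last zs \<in> c'"
        by blast
      have "vale e (hd zs) = v" using vale_class[OF c zs(4)] by (simp add: v_def)
      moreover have "vale e (last zs) = v'" using vale_class[OF c' zs(5)] by (simp add: v'_def)
      ultimately show "taxicab v v' \<le> a" using chain_cost_ge[OF zs(2)] zs(1,3) by (simp add: Xe_simps)
    qed
    then show "dst (Xe e) (alphae e c) (alphae e c') \<le> dst (tensor (Xe e)) c c'"
      using lhs by (simp add: dst_tensor tdist_def)
  next
    fix p assume p: "p \<in> M0"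
    define m where "m = (SOME m. m \<in> Mset \<and> p \<in> subsq m)"
    have m: "m \<in> Mset \<and> p \<in> subsq m" using M0_subsq_ex[OF p] unfolding m_def by (metis (mono_tags, lifting) someI_ex)
    define q where "q = (3 * fst p - real (fst m), 3 * snd p - real (snd m))"
    have q: "q \<in> U" using m by (simp add: subsq_iff q_def U_iff)
    have "tS (Xe e) p = tcls (Xe e) m (e q)" by (simp add: tS_def Let_def m_def[symmetric] Xe_simps q_def)
    then have "alphae e (sqm (tensor (Xe e)) p) = e (vale e (m, e q))" using alphae_tcls[OF conjunct1[OF m] q]
      by (simp add: sqm_tensor)
    also have "vale e (m, e q) = p" using q by (simp add: vale_def inv_e q_def)
    finally show "alphae e (sqm (tensor (Xe e)) p) = sqm (Xe e) p" by (simp add: Xe_simps)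
  qed
qed

end

lemma exists_inj_U:
  assumes "is_squams (X :: 'a squams)"
  shows "\<exists>e :: real \<times> real \<Rightarrow> 'a. inj_on e U"
proof -
  have "U \<lesssim> (UNIV::(real\<times>real) set)" by (simp add: subset_imp_lepoll)
  also have "(UNIV::(real\<times>real) set) \<approx> (UNIV::real set)"
    by (metis UNIV_Times_UNIV card_of_Times_same_infinite eqpoll_iff_card_of_ordIso infinite_UNIV_char_0)
  also have "(UNIV::real set) \<lesssim> {0<..<(1::real)}"
    by (metis eqpoll_real_subset eqpoll_imp_lepoll eqpoll_sym greaterThanLessThan_iff zero_less_one)
  also have "{0<..<(1::real)} \<lesssim> (UNIV :: 'a set)"
  proof -
    have "inj_on (sqm X) M0" using assms by (simp add: is_squams_def)
    moreover have "(\<lambda>r. (r, 0::real)) ` {0<..<1} \<subseteq> M0" by (auto simp: M0_def)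
    ultimately have "inj_on (\<lambda>r. sqm X (r, 0)) {0<..<(1::real)}"
      unfolding inj_on_def by (metis (no_types, lifting) image_subset_iff prod.inject)
    then show ?thesis unfolding lepoll_def by blast
  qed
  finally show ?thesis unfolding lepoll_def by blast
qed


definition fm :: "nat \<times> nat \<Rightarrow> real \<times> real \<Rightarrow> real \<times> real" where
  "fm m p = ((real (fst m) + fst p) / 3, (real (snd m) + snd p) / 3)"

lemma fm_U: "m \<in> Mset \<Longrightarrow> p \<in> U \<Longrightarrow> fm m p \<in> U"
  using Mset_le[of m] by (auto simp: fm_def U_iff)

lemma glue_gen_sqm: "sqm X = sqm Y \<Longrightarrow> glue_gen X = glue_gen Y"
  unfolding glue_gen_def[abs_def] by simp

locale initG =
  fixes G :: "'a squams" and \<eta> :: "((nat \<times> nat) \<times> 'a) set \<Rightarrow> 'a"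
  assumes init: "is_initial_alg G \<eta>"
begin

lemma G_alg: "is_alg G \<eta>" using init by (simp add: is_initial_alg_def)
lemma G_sq: "is_squams G" using G_alg by (simp add: is_alg_def)
lemma eta_mor: "is_mor (tensor G) G \<eta>" using G_alg by (simp add: is_alg_def)
lemma G_metric: "Metric_space (carr G) (dst G)" using G_sq by (simp add: is_squams_def)

lemma initial:
  assumes "is_alg (X :: 'a squams) \<alpha>"
  obtains h where "is_alg_mor G \<eta> X \<alpha> h" "\<And>h'. is_alg_mor G \<eta> X \<alpha> h' \<Longrightarrow> \<forall>x\<in>carr G. h' x = h x"
proof -
  have "\<exists>h. is_alg_mor G \<eta> X \<alpha> h \<and> (\<forall>h'. is_alg_mor G \<eta> X \<alpha> h' \<longrightarrow> (\<forall>x\<in>carr G. h' x = h x))"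
    using init assms unfolding is_initial_alg_def by blast
  then show ?thesis using that by blast
qed

lemma S_in: "p \<in> M0 \<Longrightarrow> sqm G p \<in> carr G"
  using G_sq by (auto simp: is_squams_def)

lemma eta_in: "m \<in> Mset \<Longrightarrow> x \<in> carr G \<Longrightarrow> \<eta> (tcls G m x) \<in> carr G"
  using eta_mor tcls_in[of m x G] by (auto simp: is_mor_def)

lemma eta_short: "c \<in> carr (tensor G) \<Longrightarrow> c' \<in> carr (tensor G) \<Longrightarrow> dst G (\<eta> c) (\<eta> c') \<le> tdist G c c'"
  using eta_mor by (auto simp: is_mor_def dst_tensor)

lemma eta_S: "p \<in> M0 \<Longrightarrow> \<eta> (tS G p) = sqm G p"
  using eta_mor by (auto simp: is_mor_def sqm_tensor)

lemma S_dec: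
  assumes p: "p \<in> M0"
  obtains m p' where "m \<in> Mset" "p' \<in> M0" "sqm G p = \<eta> (tcls G m (sqm G p'))" "p = fm m p'"
proof -
  define m where "m = (SOME m. m \<in> Mset \<and> p \<in> subsq m)"
  have m: "m \<in> Mset \<and> p \<in> subsq m" using M0_subsq_ex[OF p] unfolding m_def by (metis (mono_tags, lifting) someI_ex)
  define q where "q = (3 * fst p - real (fst m), 3 * snd p - real (snd m))"
  have q: "q \<in> M0" using M0_subsq_M0[OF p] m by (simp add: q_def)
  have "tS G p = tcls G m (sqm G q)" by (simp add: tS_def Let_def m_def[symmetric] q_def)
  then have "sqm G p = \<eta> (tcls G m (sqm G q))" using eta_S[OF p] by simp
  moreover have "p = fm m q" by (simp add: fm_def q_def)
  ultimately show ?thesis using that m q by blast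
qed

section \<open>The morphism to the unit square\<close>

definition e0 :: "real \<times> real \<Rightarrow> 'a" where "e0 = (SOME e. inj_on e U)"

lemma e0_inj: "inj_on e0 U"
  using exists_inj_U[OF G_sq] unfolding e0_def by (metis someI_ex)

definition hh :: "'a \<Rightarrow> 'a" where
  "hh = (SOME h. is_alg_mor G \<eta> (Xe e0) (alphae e0) h)"

lemma hh_mor: "is_alg_mor G \<eta> (Xe e0) (alphae e0) hh"
proof -
  obtain h where "is_alg_mor G \<eta> (Xe e0) (alphae e0) h"
    using initial[OF Xe_alg[OF e0_inj]] by blast
  then show ?thesis unfolding hh_def by (metis someI_ex)
qed

definition hr :: "'a \<Rightarrow> real \<times> real" where "hr x = inv_into U e0 (hh x)"

lemma hr_U: "x \<in> carr G \<Longrightarrow> hr x \<in> U \<and> hh x = e0 (hr x)"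
proof -
  assume x: "x \<in> carr G"
  then have "hh x \<in> e0 ` U" using hh_mor by (auto simp: is_alg_mor_def is_mor_def Xe_simps)
  then show ?thesis unfolding hr_def by (simp add: inv_into_into f_inv_into_f)
qed

lemma hr_short: "x \<in> carr G \<Longrightarrow> y \<in> carr G \<Longrightarrow> taxicab (hr x) (hr y) \<le> dst G x y"
  using hh_mor by (auto simp: is_alg_mor_def is_mor_def Xe_simps hr_def)

lemma hr_S: "p \<in> M0 \<Longrightarrow> hr (sqm G p) = p"
proof -
  assume p: "p \<in> M0"
  then have "hh (sqm G p) = e0 p" using hh_mor by (auto simp: is_alg_mor_def is_mor_def Xe_simps)
  then show ?thesis unfolding hr_def using inv_e[OF e0_inj subsetD[OF M0_U p]] by simp
qed

lemma hr_eta: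
  assumes m: "m \<in> Mset" and x: "x \<in> carr G"
  shows "hr (\<eta> (tcls G m x)) = fm m (hr x)"
proof -
  define c where "c = tcls G m x"
  have c: "c \<in> carr (tensor G)" using tcls_in[OF m x] by (simp add: c_def)
  define z where "z = (SOME z. z \<in> c)"
  have z: "z \<in> c" unfolding z_def c_def using tcls_self[OF m x] by (rule someI)
  have zm: "fst z \<in> Mset" "snd z \<in> carr G" using tcls_mem_eq[OF c z] by auto
  have "hh (\<eta> c) = alphae e0 (tensor_map G (Xe e0) hh c)"
    using hh_mor c by (auto simp: is_alg_mor_def)
  also have "tensor_map G (Xe e0) hh c = tcls (Xe e0) (fst z) (e0 (hr (snd z)))"
    using hr_U[OF zm(2)] by (simp add: tensor_map_def z_def Let_def)
  also have "alphae e0 \<dots> = e0 (vale e0 (fst z, e0 (hr (snd z))))"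
    using alphae_tcls[OF e0_inj zm(1)] hr_U[OF zm(2)] by simp
  also have "vale e0 (fst z, e0 (hr (snd z))) = fm (fst z) (hr (snd z))"
    using hr_U[OF zm(2)] inv_e[OF e0_inj] by (simp add: vale_def fm_def)
  also have "fm (fst z) (hr (snd z)) = fm m (hr x)"
  proof -
    have "(\<lambda>z. fm (fst z) (hr (snd z))) z = (\<lambda>z. fm (fst z) (hr (snd z))) (m, x)"
    proof (rule class_inv[of G])
      fix a b assume "glue_gen G a b"
      then obtain p q where "p \<in> M0" "q \<in> M0" "snd a = sqm G p" "snd b = sqm G q"
        "(real (fst (fst a)) + fst p) / 3 = (real (fst (fst b)) + fst q) / 3"
        "(real (snd (fst a)) + snd p) / 3 = (real (snd (fst b)) + snd q) / 3"
        unfolding glue_gen_def by blast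
      then show "fm (fst a) (hr (snd a)) = fm (fst b) (hr (snd b))"
        by (simp add: hr_S fm_def)
    next
      show "z \<in> tcls G m x" using z by (simp add: c_def)
    qed
    then show ?thesis by simp
  qed
  finally have hc: "hh (\<eta> c) = e0 (fm m (hr x))" .
  have "hr (\<eta> c) = inv_into U e0 (e0 (fm m (hr x)))" unfolding hr_def[of "\<eta> c"] hc ..
  also have "\<dots> = fm m (hr x)" using inv_e[OF e0_inj fm_U[OF m conjunct1[OF hr_U[OF x]]]] .
  finally show ?thesis by (simp add: c_def)
qed

section \<open>The generated subalgebra\<close>

primrec Bk :: "nat \<Rightarrow> 'a set" where
  "Bk 0 = sqm G ` M0"
| "Bk (Suc k) = Bk k \<union> {\<eta> (tcls G m x) | m x. m \<in> Mset \<and> x \<in> Bk k}"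

definition Bset :: "'a set" where "Bset = (\<Union>k. Bk k)"

lemma Bk_C: "Bk k \<subseteq> carr G"
  by (induction k) (auto simp: S_in eta_in)

lemma Bset_C: "Bset \<subseteq> carr G"
  using Bk_C by (auto simp: Bset_def)

lemma Bk_mono: "k \<le> l \<Longrightarrow> Bk k \<subseteq> Bk l"
  by (induction l) (auto simp: le_Suc_eq)

lemma S_Bset: "p \<in> M0 \<Longrightarrow> sqm G p \<in> Bset"
  by (auto simp: Bset_def intro!: exI[of _ 0])

lemma eta_Bset: "m \<in> Mset \<Longrightarrow> x \<in> Bset \<Longrightarrow> \<eta> (tcls G m x) \<in> Bset"
proof -
  assume m: "m \<in> Mset" and "x \<in> Bset"
  then obtain k where "x \<in> Bk k" by (auto simp: Bset_def)
  then have "\<eta> (tcls G m x) \<in> {\<eta> (tcls G m x) | m x. m \<in> Mset \<and> x \<in> Bk k}" using m by blast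
  then have "\<eta> (tcls G m x) \<in> Bk (Suc k)" by simp
  then show ?thesis unfolding Bset_def by blast
qed

definition XB :: "'a squams" where "XB = (Bset, dst G, sqm G)"

lemma XB_simps: "carr XB = Bset" "dst XB = dst G" "sqm XB = sqm G"
  by (simp_all add: XB_def carr_def dst_def sqm_def)

lemma glue_gen_XB: "glue_gen XB = glue_gen G"
  by (rule glue_gen_sqm) (simp add: XB_simps)

lemma glue_rel_XB: "a \<in> Mset \<times> Bset \<Longrightarrow> b \<in> Mset \<times> Bset \<Longrightarrow> (a, b) \<in> glue_rel XB \<longleftrightarrow> (a, b) \<in> glue_rel G"
  using Bset_C by (auto simp: glue_rel_def glue_gen_XB XB_simps)

lemma tcls_XB: assumes "m \<in> Mset" "x \<in> Bset" shows "tcls XB m x = tcls G m x"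
proof
  show "tcls XB m x \<subseteq> tcls G m x"
    using Bset_C by (auto simp: tcls_def glue_rel_def glue_gen_XB XB_simps)
next
  show "tcls G m x \<subseteq> tcls XB m x"
  proof
    fix y assume "y \<in> tcls G m x"
    then have y: "((m, x), y) \<in> glue_rel G" by (simp add: tcls_def)
    have "y \<in> Mset \<times> Bset"
      using glue_rel_D[OF y] assms S_Bset by auto
    then show "y \<in> tcls XB m x" using y glue_rel_XB assms by (simp add: tcls_def)
  qed
qed

lemma chain_cost_XB: "set zs \<subseteq> Mset \<times> Bset \<Longrightarrow> chain_cost XB zs = chain_cost G zs"
proof (induction zs rule: induct_list012)
  case (3 x y zs)
  then show ?case using glue_rel_XB[of x y] by (simp add: chain_cost_def dMX_def XB_simps)
qed (simp_all add: chain_cost_def)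

lemma tS_XB: assumes p: "p \<in> M0" shows "tS XB p = tS G p"
proof -
  define m where "m = (SOME m. m \<in> Mset \<and> p \<in> subsq m)"
  have m: "m \<in> Mset \<and> p \<in> subsq m" using M0_subsq_ex[OF p] unfolding m_def by (metis (mono_tags, lifting) someI_ex)
  define q where "q = (3 * fst p - real (fst m), 3 * snd p - real (snd m))"
  have q: "q \<in> M0" using M0_subsq_M0[OF p] m by (simp add: q_def)
  have "tS XB p = tcls XB m (sqm G q)" by (simp add: tS_def Let_def m_def[symmetric] q_def XB_simps)
  also have "\<dots> = tcls G m (sqm G q)" using tcls_XB m S_Bset[OF q] by blast
  also have "\<dots> = tS G p" by (simp add: tS_def Let_def m_def[symmetric] q_def)
  finally show ?thesis .
qed

lemma dst_nonneg: "0 \<le> dst G x y"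
  using G_metric by (simp add: Metric_space_def)

lemma chain_cost_nonneg: "0 \<le> chain_cost G zs"
  unfolding chain_cost_def
  by (rule sum_list_nonneg) (auto simp: dMX_def dst_nonneg)

lemma tdist_le_chain:
  assumes "zs \<noteq> []" "set zs \<subseteq> Mset \<times> carr G" "hd zs \<in> c" "last zs \<in> c'"
  shows "tdist G c c' \<le> chain_cost G zs"
  unfolding tdist_def
  by (rule cInf_lower) (use assms chain_cost_nonneg in \<open>auto intro!: bdd_belowI[of _ 0]\<close>)

lemma tdist_XB:
  assumes c: "c \<in> carr (tensor XB)" and c': "c' \<in> carr (tensor XB)"
  shows "tdist G c c' \<le> tdist XB c c'"
proof -
  let ?A = "{chain_cost XB zs |zs. zs \<noteq> [] \<and> set zs \<subseteq> Mset \<times> carr XB \<and> hd zs \<in> c \<and> last zs \<in> c'}"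
  let ?B = "{chain_cost G zs |zs. zs \<noteq> [] \<and> set zs \<subseteq> Mset \<times> carr G \<and> hd zs \<in> c \<and> last zs \<in> c'}"
  obtain m x where mx: "m \<in> Mset" "x \<in> carr XB" "c = tcls XB m x" using c by (rule tensor_carrE)
  obtain m' x' where mx': "m' \<in> Mset" "x' \<in> carr XB" "c' = tcls XB m' x'" using c' by (rule tensor_carrE)
  have ne: "?A \<noteq> {}"
  proof -
    have "[(m, x), (m', x')] \<noteq> [] \<and> set [(m, x), (m', x')] \<subseteq> Mset \<times> carr XB \<and> hd [(m, x), (m', x')] \<in> c \<and> last [(m, x), (m', x')] \<in> c'"
      using mx mx' tcls_self[OF mx(1,2)] tcls_self[OF mx'(1,2)] by auto
    then show ?thesis by blast
  qed
  have sub: "?A \<subseteq> ?B"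
  proof
    fix a assume "a \<in> ?A"
    then obtain zs where zs: "a = chain_cost XB zs" "zs \<noteq> []" "set zs \<subseteq> Mset \<times> carr XB" "hd zs \<in> c" "last zs \<in> c'"
      by blast
    have "a = chain_cost G zs" using chain_cost_XB zs by (simp add: XB_simps)
    moreover have "set zs \<subseteq> Mset \<times> carr G" using zs(3) Bset_C by (auto simp: XB_simps)
    ultimately show "a \<in> ?B" using zs by blast
  qed
  have "Inf ?B \<le> Inf ?A"
    by (rule cInf_superset_mono[OF ne _ sub]) (auto intro!: bdd_belowI[of _ 0] simp: chain_cost_nonneg)
  then show ?thesis by (simp add: tdist_def)
qed

lemma XB_squams: "is_squams XB"
proof -
  have "Metric_space Bset (dst G)"
    using Metric_space.subspace[OF G_metric Bset_C] .
  then show ?thesis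
    using G_sq Bset_C S_Bset unfolding is_squams_def XB_simps by (auto simp: subset_iff)
qed

lemma XB_carr_tensor: "c \<in> carr (tensor XB) \<Longrightarrow> \<exists>m x. m \<in> Mset \<and> x \<in> Bset \<and> c = tcls G m x"
proof -
  assume c: "c \<in> carr (tensor XB)"
  obtain m x where mx: "m \<in> Mset" "x \<in> carr XB" "c = tcls XB m x" using c by (rule tensor_carrE)
  then have "x \<in> Bset" "c = tcls G m x" using tcls_XB by (auto simp: XB_simps)
  then show ?thesis using mx(1) by blast
qed

lemma XB_carr_tensor_G: "c \<in> carr (tensor XB) \<Longrightarrow> c \<in> carr (tensor G)"
proof -
  assume c: "c \<in> carr (tensor XB)"
  obtain m x where "m \<in> Mset" "x \<in> Bset" "c = tcls G m x" using XB_carr_tensor[OF c] by blast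
  then show ?thesis using tcls_in[of m x G] Bset_C by auto
qed

lemma XB_alg: "is_alg XB \<eta>"
  unfolding is_alg_def
proof (intro conjI XB_squams)
  show "is_mor (tensor XB) XB \<eta>"
    unfolding is_mor_def
  proof (intro conjI ballI)
    show "\<eta> ` carr (tensor XB) \<subseteq> carr XB"
      using XB_carr_tensor eta_Bset by (auto simp: XB_simps)
  next
    fix c c' assume c: "c \<in> carr (tensor XB)" and c': "c' \<in> carr (tensor XB)"
    have "dst G (\<eta> c) (\<eta> c') \<le> tdist G c c'"
      using eta_short XB_carr_tensor_G c c' by blast
    also have "\<dots> \<le> tdist XB c c'" using tdist_XB c c' .
    finally show "dst XB (\<eta> c) (\<eta> c') \<le> dst (tensor XB) c c'" by (simp add: XB_simps dst_tensor)
  next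
    fix p assume "p \<in> M0"
    then show "\<eta> (sqm (tensor XB) p) = sqm XB p" using eta_S tS_XB by (simp add: sqm_tensor XB_simps)
  qed
qed

lemma id_alg_mor: "is_alg_mor G \<eta> G \<eta> (\<lambda>x. x)"
  unfolding is_alg_mor_def is_mor_def
proof (intro conjI ballI)
  fix c assume c: "c \<in> carr (tensor G)"
  obtain m x where mx: "m \<in> Mset" "x \<in> carr G" "c = tcls G m x" using c by (rule tensor_carrE)
  have z: "(SOME z. z \<in> c) \<in> c" using tcls_self[OF mx(1,2)] mx(3) by (metis someI)
  show "\<eta> c = \<eta> (tensor_map G G (\<lambda>x. x) c)"
    using tcls_mem_eq(1)[OF c z] by (simp add: tensor_map_def Let_def)
qed simp_all

lemma C_Bset: "carr G = Bset"
proof -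
  obtain hB where hB: "is_alg_mor G \<eta> XB \<eta> hB" using initial[OF XB_alg] by blast
  have hBin: "x \<in> carr G \<Longrightarrow> hB x \<in> Bset" for x using hB by (auto simp: is_alg_mor_def is_mor_def XB_simps)
  have "is_alg_mor G \<eta> G \<eta> hB"
    unfolding is_alg_mor_def is_mor_def
  proof (intro conjI ballI)
    show "hB ` carr G \<subseteq> carr G" using hBin Bset_C by auto
    show "dst G (hB x) (hB y) \<le> dst G x y" if "x \<in> carr G" "y \<in> carr G" for x y
      using hB that by (auto simp: is_alg_mor_def is_mor_def XB_simps)
    show "hB (sqm G p) = sqm G p" if "p \<in> M0" for p
      using hB that by (auto simp: is_alg_mor_def is_mor_def XB_simps)
    fix c assume c: "c \<in> carr (tensor G)"
    obtain m x where mx: "m \<in> Mset" "x \<in> carr G" "c = tcls G m x" using c by (rule tensor_carrE)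
    have z: "(SOME z. z \<in> c) \<in> c" using tcls_self[OF mx(1,2)] mx(3) by (metis someI)
    have zz: "fst (SOME z. z \<in> c) \<in> Mset" "snd (SOME z. z \<in> c) \<in> carr G" using tcls_mem_eq[OF c z] by auto
    have "hB (\<eta> c) = \<eta> (tensor_map G XB hB c)" using hB c by (auto simp: is_alg_mor_def)
    also have "tensor_map G XB hB c = tensor_map G G hB c"
      using tcls_XB[OF zz(1) hBin[OF zz(2)]] by (simp add: tensor_map_def Let_def)
    finally show "hB (\<eta> c) = \<eta> (tensor_map G G hB c)" .
  qed
  obtain h0 where h0: "\<And>h'. is_alg_mor G \<eta> G \<eta> h' \<Longrightarrow> \<forall>x\<in>carr G. h' x = h0 x"
    using initial[OF G_alg] by blast
  have "\<forall>x\<in>carr G. hB x = h0 x" "\<forall>x\<in>carr G. x = h0 x"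
    using h0[OF \<open>is_alg_mor G \<eta> G \<eta> hB\<close>] h0[OF id_alg_mor] by auto
  then have "x \<in> carr G \<Longrightarrow> x \<in> Bset" for x using hBin[of x] by simp
  then show ?thesis using Bset_C by blast
qed

end

context initG
begin

lemma Bk_dec:
  assumes "x \<in> Bk k"
  shows "\<exists>m\<in>Mset. \<exists>x'\<in>Bk k. x = \<eta> (tcls G m x')"
  using assms
proof (induction k arbitrary: x)
  case 0
  then obtain p where p: "p \<in> M0" "x = sqm G p" by auto
  obtain m p' where "m \<in> Mset" "p' \<in> M0" "sqm G p = \<eta> (tcls G m (sqm G p'))" by (rule S_dec[OF p(1)])
  then show ?case using p by auto
next
  case (Suc k)
  show ?case
  proof (cases "x \<in> Bk k")
    case True
    then obtain m x' where "m \<in> Mset" "x' \<in> Bk k" "x = \<eta> (tcls G m x')" using Suc.IH by blast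
    moreover have "x' \<in> Bk (Suc k)" using \<open>x' \<in> Bk k\<close> by simp
    ultimately show ?thesis by blast
  next
    case False
    then have "x \<in> {\<eta> (tcls G m x) | m x. m \<in> Mset \<and> x \<in> Bk k}" using Suc.prems by simp
    then obtain m x' where "m \<in> Mset" "x' \<in> Bk k" "x = \<eta> (tcls G m x')" by blast
    moreover have "x' \<in> Bk (Suc k)" using \<open>x' \<in> Bk k\<close> by simp
    ultimately show ?thesis by blast
  qed
qed

lemma Bk_dec_Suc:
  assumes "x \<in> Bk (Suc k)"
  shows "\<exists>m\<in>Mset. \<exists>x'\<in>Bk k. x = \<eta> (tcls G m x')"
proof (cases "x \<in> Bk k")
  case True then show ?thesis using Bk_dec by blast
next
  case False
  then have "x \<in> {\<eta> (tcls G m x) | m x. m \<in> Mset \<and> x \<in> Bk k}" using assms by simp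
  then show ?thesis by blast
qed


lemma G_tri: "x \<in> carr G \<Longrightarrow> y \<in> carr G \<Longrightarrow> z \<in> carr G \<Longrightarrow> dst G x z \<le> dst G x y + dst G y z"
  using Metric_space.triangle[OF G_metric] by blast

lemma G_le2: "x \<in> carr G \<Longrightarrow> y \<in> carr G \<Longrightarrow> dst G x y \<le> 2"
  using G_sq unfolding is_squams_def by (elim conjE) blast

lemma G_sq1:
  assumes "i \<in> {0,1}" "r \<in> {0..1}" "s \<in> {0..1}"
  shows "dst G (sqm G (i, r)) (sqm G (i, s)) = \<bar>s - r\<bar>" "dst G (sqm G (r, i)) (sqm G (s, i)) = \<bar>s - r\<bar>"
proof -
  have H: "\<forall>i\<in>{0,1}. \<forall>r\<in>{0..1}. \<forall>s\<in>{0..1}.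
        dst G (sqm G (i, r)) (sqm G (i, s)) = \<bar>s - r\<bar> \<and>
        dst G (sqm G (r, i)) (sqm G (s, i)) = \<bar>s - r\<bar>"
    using G_sq unfolding is_squams_def by (elim conjE) assumption
  show "dst G (sqm G (i, r)) (sqm G (i, s)) = \<bar>s - r\<bar>" "dst G (sqm G (r, i)) (sqm G (s, i)) = \<bar>s - r\<bar>"
    using bspec[OF bspec[OF bspec[OF H assms(1)] assms(2)] assms(3)] by blast+
qed

lemma eta_same:
  assumes m: "m \<in> Mset" and x: "x \<in> carr G" and y: "y \<in> carr G"
  shows "dst G (\<eta> (tcls G m x)) (\<eta> (tcls G m y)) \<le> dst G x y / 3"
proof -
  have "dst G (\<eta> (tcls G m x)) (\<eta> (tcls G m y)) \<le> tdist G (tcls G m x) (tcls G m y)"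
    using eta_short[OF tcls_in[OF m x] tcls_in[OF m y]] .
  also have "\<dots> \<le> chain_cost G [(m, x), (m, y)]"
    by (rule tdist_le_chain) (use m x y tcls_self[OF m x] tcls_self[OF m y] in auto)
  also have "\<dots> \<le> dst G x y / 3"
    using dst_nonneg[of x y] by (simp add: chain_cost_def dMX_def)
  finally show ?thesis .
qed

end

lemma coord_diff:
  fixes a b :: nat and x y :: real
  assumes "real a + x = real b + y" "x \<in> {0..1}" "y \<in> {0..1}"
  shows "(a = b \<and> x = y) \<or> (a = b + 1 \<and> x = 0 \<and> y = 1) \<or> (b = a + 1 \<and> x = 1 \<and> y = 0)"
proof -
  consider "a = b" | "a \<ge> b + 1" | "b \<ge> a + 1" by linarith
  then show ?thesis
  proof cases
    case 1 then show ?thesis using assms by simp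
  next
    case 2
    then have "real a \<ge> real b + 1" by (metis of_nat_1 of_nat_add of_nat_le_iff)
    then have "x = 0 \<and> y = 1 \<and> real a = real b + 1" using assms by auto
    then show ?thesis by (metis of_nat_1 of_nat_add of_nat_eq_iff)
  next
    case 3
    then have "real b \<ge> real a + 1" by (metis of_nat_1 of_nat_add of_nat_le_iff)
    then have "x = 1 \<and> y = 0 \<and> real b = real a + 1" using assms by auto
    then show ?thesis by (metis of_nat_1 of_nat_add of_nat_eq_iff)
  qed
qed

lemma fm_eq_iff: "fm m p = fm n q \<longleftrightarrow> real (fst m) + fst p = real (fst n) + fst q \<and> real (snd m) + snd p = real (snd n) + snd q"
  by (auto simp: fm_def)

lemma glue_genI:
  assumes "m \<in> Mset" "n \<in> Mset" "adjacent m n" "p \<in> M0" "q \<in> M0" "fm m p = fm n q"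
  shows "glue_gen X (m, sqm X p) (n, sqm X q)"
  using assms unfolding glue_gen_def fm_def by auto

context initG begin

lemma glue_eq:
  assumes m: "m \<in> Mset" and n: "n \<in> Mset" and p: "p \<in> M0" and q: "q \<in> M0" and w: "fm m p = fm n q"
  shows "tcls G m (sqm G p) = tcls G n (sqm G q)"
proof -
  have pU: "fst p \<in> {0..1}" "snd p \<in> {0..1}" and qU: "fst q \<in> {0..1}" "snd q \<in> {0..1}"
    using p q by (auto simp: M0_iff)
  have w1: "real (fst m) + fst p = real (fst n) + fst q" and w2: "real (snd m) + snd p = real (snd n) + snd q"
    using w by (auto simp: fm_eq_iff)
  note c1 = coord_diff[OF w1 pU(1) qU(1)] and c2 = coord_diff[OF w2 pU(2) qU(2)]
  have Sp: "sqm G p \<in> carr G" and Sq: "sqm G q \<in> carr G" using S_in p q by auto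
  show ?thesis
  proof (cases "m = n")
    case True
    then have "p = q" using w1 w2 by (simp add: prod_eq_iff)
    then show ?thesis using True by simp
  next
    case mn: False
    show ?thesis
    proof (cases "adjacent m n")
      case True
      then have "glue_gen G (m, sqm G p) (n, sqm G q)" using glue_genI m n p q w by blast
      then show ?thesis by (intro tcls_eqI) (use m n Sp Sq in auto)
    next
      case nadj: False
      have d1: "fst m \<noteq> fst n" and d2: "snd m \<noteq> snd n"
        using mn nadj c1 c2 by (auto simp: adjacent_def prod_eq_iff)
      have a1: "\<bar>real (fst m) - real (fst n)\<bar> = 1" and a2: "\<bar>real (snd m) - real (snd n)\<bar> = 1"
        using c1 c2 d1 d2 by auto
      have pc: "fst p \<in> {0,1}" "fst q \<in> {0,1}" "snd p \<in> {0,1}" "snd q \<in> {0,1}"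
        using c1 c2 d1 d2 by auto
      have link: "tcls G m (sqm G p) = tcls G n (sqm G q)"
        if k: "k \<in> Mset" "r \<in> M0" "adjacent m k" "adjacent k n" "fm m p = fm k r" "fm k r = fm n q" for k r
      proof -
        have Sr: "sqm G r \<in> carr G" using S_in k by auto
        have "glue_gen G (m, sqm G p) (k, sqm G r)" using glue_genI m k p by blast
        moreover have "glue_gen G (k, sqm G r) (n, sqm G q)" using glue_genI n k q by blast
        ultimately have "equivclp (glue_gen G) (m, sqm G p) (n, sqm G q)"
          by (meson equivclp_trans r_into_equivclp)
        then show ?thesis by (intro tcls_eqI) (use m n Sp Sq in auto)
      qed
      have Mle: "fst m \<le> 2" "snd m \<le> 2" "fst n \<le> 2" "snd n \<le> 2" using m n by (auto simp: Mset_iff)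
      show ?thesis
      proof (cases "(fst n, snd m) \<in> Mset")
        case True
        show ?thesis
        proof (rule link[OF True])
          show "(fst q, snd p) \<in> M0" using pc qU pU by (auto simp: M0_iff)
          show "adjacent m (fst n, snd m)" using a1 by (simp add: adjacent_def)
          show "adjacent (fst n, snd m) n" using a2 by (simp add: adjacent_def abs_minus_commute)
          show "fm m p = fm (fst n, snd m) (fst q, snd p)" using w1 by (simp add: fm_eq_iff)
          show "fm (fst n, snd m) (fst q, snd p) = fm n q" using w2 by (simp add: fm_eq_iff)
        qed
      next
        case False
        then have k2: "(fst m, snd n) \<in> Mset" using Mle d1 by (auto simp: Mset_iff)
        show ?thesis
        proof (rule link[OF k2])
          show "(fst p, snd q) \<in> M0" using pc qU pU by (auto simp: M0_iff)
          show "adjacent m (fst m, snd n)" using a2 by (simp add: adjacent_def)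
          show "adjacent (fst m, snd n) n" using a1 by (simp add: adjacent_def abs_minus_commute)
          show "fm m p = fm (fst m, snd n) (fst p, snd q)" using w2 by (simp add: fm_eq_iff)
          show "fm (fst m, snd n) (fst p, snd q) = fm n q" using w1 by (simp add: fm_eq_iff)
        qed
      qed
    qed
  qed
qed

end

definition pc :: "nat \<Rightarrow> nat \<Rightarrow> real \<Rightarrow> real" where
  "pc i j t = (if i = j then t else if i < j then 1 else 0)"
definition qc :: "nat \<Rightarrow> nat \<Rightarrow> real \<Rightarrow> real" where
  "qc i j t = (if i = j then t else if i < j then 0 else 1)"

lemma coord_near:
  fixes i j :: nat and t s :: real
  assumes ij: "\<bar>real i - real j\<bar> \<le> 1" and t: "t \<in> {0..1}" and s: "s \<in> {0..1}"
  shows "real i + pc i j t = real j + qc i j t" "pc i j t \<in> {0..1}" "qc i j t \<in> {0..1}"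
    "i \<noteq> j \<Longrightarrow> pc i j t \<in> {0,1} \<and> qc i j t \<in> {0,1}"
    "\<bar>(real i + t)/3 - (real i + pc i j t)/3\<bar> + \<bar>(real j + qc i j t)/3 - (real j + s)/3\<bar> = \<bar>(real i + t)/3 - (real j + s)/3\<bar>"
proof -
  consider "i = j" | "j = i + 1" | "i = j + 1" using ij by linarith
  then have "(real i + pc i j t = real j + qc i j t \<and> pc i j t \<in> {0..1} \<and> qc i j t \<in> {0..1}
    \<and> (i \<noteq> j \<longrightarrow> pc i j t \<in> {0,1} \<and> qc i j t \<in> {0,1})) \<and>
    \<bar>(real i + t)/3 - (real i + pc i j t)/3\<bar> + \<bar>(real j + qc i j t)/3 - (real j + s)/3\<bar> = \<bar>(real i + t)/3 - (real j + s)/3\<bar>"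
  proof cases
    case 1 then show ?thesis using t by (simp add: pc_def qc_def)
  next
    case 2 then show ?thesis using t s by (simp add: pc_def qc_def abs_if field_simps)
  next
    case 3 then show ?thesis using t s by (simp add: pc_def qc_def abs_if field_simps)
  qed
  then show "real i + pc i j t = real j + qc i j t" "pc i j t \<in> {0..1}" "qc i j t \<in> {0..1}"
    "i \<noteq> j \<Longrightarrow> pc i j t \<in> {0,1} \<and> qc i j t \<in> {0,1}"
    "\<bar>(real i + t)/3 - (real i + pc i j t)/3\<bar> + \<bar>(real j + qc i j t)/3 - (real j + s)/3\<bar> = \<bar>(real i + t)/3 - (real j + s)/3\<bar>"
    by blast+
qed

lemma fm_taxicab: "taxicab (fm m a) (fm m b) = taxicab a b / 3"
  by (simp add: taxicab_def fm_def diff_divide_distrib[symmetric] add_divide_distrib[symmetric])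

context initG begin

lemma base_bound:
  assumes p: "p \<in> M0" and q: "q \<in> M0"
  shows "dst G (sqm G p) (sqm G q) \<le> 6 * taxicab p q"
proof -
  obtain p1 p2 q1 q2 where pq: "p = (p1, p2)" "q = (q1, q2)" by (cases p, cases q)
  have r: "p1 \<in> {0..1}" "p2 \<in> {0..1}" "q1 \<in> {0..1}" "q2 \<in> {0..1}" using p q pq by (auto simp: M0_iff)
  have bp: "p1 \<in> {0,1} \<or> p2 \<in> {0,1}" and bq: "q1 \<in> {0,1} \<or> q2 \<in> {0,1}" using p q pq by (auto simp: M0_iff)
  have tx: "taxicab p q = \<bar>p1 - q1\<bar> + \<bar>p2 - q2\<bar>" using pq by (simp add: taxicab_def)
  have le2: "dst G (sqm G p) (sqm G q) \<le> 2" using G_le2 S_in p q by blast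
  have M0I: "a \<in> {0..1} \<Longrightarrow> b \<in> {0..1} \<Longrightarrow> a \<in> {0,1} \<or> b \<in> {0,1} \<Longrightarrow> (a, b) \<in> M0" for a b
    by (auto simp: M0_iff)
  have "dst G (sqm G p) (sqm G q) \<le> taxicab p q \<or> taxicab p q \<ge> 1"
  proof -
    have case_a: ?thesis if "p1 \<in> {0,1}" "q1 \<in> {0,1}"
    proof (cases "p1 = q1")
      case True
      then have "dst G (sqm G p) (sqm G q) = \<bar>q2 - p2\<bar>" using G_sq1(1)[of p1 p2 q2] that r pq by simp
      then show ?thesis using tx by (simp add: abs_minus_commute)
    next
      case False then have "\<bar>p1 - q1\<bar> = 1" using that by auto
      then show ?thesis using tx by simp
    qed
    have case_d: ?thesis if "p2 \<in> {0,1}" "q2 \<in> {0,1}"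
    proof (cases "p2 = q2")
      case True
      then have "dst G (sqm G p) (sqm G q) = \<bar>q1 - p1\<bar>" using G_sq1(2)[of p2 p1 q1] that r pq by simp
      then show ?thesis using tx by (simp add: abs_minus_commute)
    next
      case False then have "\<bar>p2 - q2\<bar> = 1" using that by auto
      then show ?thesis using tx by simp
    qed
    have case_b: ?thesis if "p1 \<in> {0,1}" "q2 \<in> {0,1}"
    proof -
      have c: "(p1, q2) \<in> M0" using M0I that r by auto
      have "dst G (sqm G p) (sqm G q) \<le> dst G (sqm G (p1, p2)) (sqm G (p1, q2)) + dst G (sqm G (p1, q2)) (sqm G (q1, q2))"
        using G_tri S_in p q c pq by blast
      also have "\<dots> = \<bar>q2 - p2\<bar> + \<bar>q1 - p1\<bar>"
        using G_sq1(1)[of p1 p2 q2] G_sq1(2)[of q2 p1 q1] that r by simp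
      finally show ?thesis using tx by linarith
    qed
    have case_c: ?thesis if "p2 \<in> {0,1}" "q1 \<in> {0,1}"
    proof -
      have c: "(q1, p2) \<in> M0" using M0I that r by auto
      have "dst G (sqm G p) (sqm G q) \<le> dst G (sqm G (p1, p2)) (sqm G (q1, p2)) + dst G (sqm G (q1, p2)) (sqm G (q1, q2))"
        using G_tri S_in p q c pq by blast
      also have "\<dots> = \<bar>q1 - p1\<bar> + \<bar>q2 - p2\<bar>"
        using G_sq1(2)[of p2 p1 q1] G_sq1(1)[of q1 p2 q2] that r by simp
      finally show ?thesis using tx by linarith
    qed
    show ?thesis using bp bq case_a case_b case_c case_d by blast
  qed
  then show ?thesis using le2 taxicab_nonneg[of p q] by linarith
qed

end

context initG begin

lemma Bk0_sub: "Bk 0 \<subseteq> Bk k"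
  using Bk_mono[of 0 k] by simp

lemma upper_Bk: "x \<in> Bk k \<Longrightarrow> y \<in> Bk k \<Longrightarrow> dst G x y \<le> 6 * taxicab (hr x) (hr y)"
proof (induction k arbitrary: x y)
  case 0
  then obtain p q where "p \<in> M0" "q \<in> M0" "x = sqm G p" "y = sqm G q" by auto
  then show ?case using base_bound hr_S by simp
next
  case (Suc k)
  obtain m x' where m: "m \<in> Mset" and x': "x' \<in> Bk k" and xd: "x = \<eta> (tcls G m x')"
    using Bk_dec_Suc[OF Suc.prems(1)] by blast
  obtain n y' where n: "n \<in> Mset" and y': "y' \<in> Bk k" and yd: "y = \<eta> (tcls G n y')"
    using Bk_dec_Suc[OF Suc.prems(2)] by blast
  have x'C: "x' \<in> carr G" and y'C: "y' \<in> carr G" using x' y' Bk_C by auto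
  define a where "a = hr x'"
  define b where "b = hr y'"
  have aU: "a \<in> U" and bU: "b \<in> U" using hr_U x'C y'C by (auto simp: a_def b_def)
  have hx: "hr x = fm m a" using hr_eta[OF m x'C] xd by (simp add: a_def)
  have hy: "hr y = fm n b" using hr_eta[OF n y'C] yd by (simp add: b_def)
  show ?case
  proof (cases "m = n")
    case True
    have "dst G x y \<le> dst G x' y' / 3" using eta_same[OF m x'C y'C] xd yd True by simp
    also have "\<dots> \<le> 6 * taxicab a b / 3" using Suc.IH[OF x' y'] by (simp add: a_def b_def)
    also have "\<dots> = 6 * taxicab (hr x) (hr y)" by (simp add: hx hy True fm_taxicab)
    finally show ?thesis .
  next
    case mn: False
    show ?thesis
    proof (cases "\<bar>real (fst m) - real (fst n)\<bar> \<le> 1 \<and> \<bar>real (snd m) - real (snd n)\<bar> \<le> 1")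
      case near: True
      have a01: "fst a \<in> {0..1}" "snd a \<in> {0..1}" and b01: "fst b \<in> {0..1}" "snd b \<in> {0..1}"
        using aU bU by (auto simp: U_iff)
      note c1 = coord_near[OF conjunct1[OF near] a01(1) b01(1)]
      note c2 = coord_near[OF conjunct2[OF near] a01(2) b01(2)]
      define p where "p = (pc (fst m) (fst n) (fst a), pc (snd m) (snd n) (snd a))"
      define q where "q = (qc (fst m) (fst n) (fst a), qc (snd m) (snd n) (snd a))"
      have bnd: "fst p \<in> {0,1} \<and> fst q \<in> {0,1} \<or> snd p \<in> {0,1} \<and> snd q \<in> {0,1}"
      proof (cases "fst m = fst n")
        case True
        then have "snd m \<noteq> snd n" using mn by (simp add: prod_eq_iff)
        then show ?thesis using c2(4) by (simp add: p_def q_def)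
      next
        case False
        then show ?thesis using c1(4) by (simp add: p_def q_def)
      qed
      have p: "p \<in> M0" using bnd c1(2) c2(2) by (auto simp: M0_iff p_def q_def)
      have q: "q \<in> M0" using bnd c1(3) c2(3) by (auto simp: M0_iff p_def q_def)
      have w: "fm m p = fm n q" using c1(1) c2(1) by (simp add: fm_eq_iff p_def q_def)
      define z where "z = \<eta> (tcls G m (sqm G p))"
      have z2: "z = \<eta> (tcls G n (sqm G q))" using glue_eq[OF m n p q w] by (simp add: z_def)
      have SpC: "sqm G p \<in> carr G" and SqC: "sqm G q \<in> carr G" using S_in p q by auto
      have zC: "z \<in> carr G" using eta_in[OF m SpC] by (simp add: z_def)
      have xC: "x \<in> carr G" and yC: "y \<in> carr G" using eta_in m n x'C y'C xd yd by auto
      have Sp: "sqm G p \<in> Bk k" and Sq: "sqm G q \<in> Bk k" using p q Bk0_sub by auto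
      have "dst G x z \<le> dst G x' (sqm G p) / 3" using eta_same[OF m x'C SpC] xd z_def by simp
      also have "\<dots> \<le> 6 * taxicab a p / 3" using Suc.IH[OF x' Sp] hr_S[OF p] by (simp add: a_def)
      also have "\<dots> = 6 * taxicab (fm m a) (fm m p)" by (simp add: fm_taxicab)
      finally have dxz: "dst G x z \<le> 6 * taxicab (fm m a) (fm m p)" .
      have "dst G z y \<le> dst G (sqm G q) y' / 3" using eta_same[OF n SqC y'C] yd z2 by simp
      also have "\<dots> \<le> 6 * taxicab q b / 3" using Suc.IH[OF Sq y'] hr_S[OF q] by (simp add: b_def)
      also have "\<dots> = 6 * taxicab (fm n q) (fm n b)" by (simp add: fm_taxicab)
      finally have dzy: "dst G z y \<le> 6 * taxicab (fm n q) (fm n b)" .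
      have "taxicab (fm m a) (fm m p) + taxicab (fm n q) (fm n b) = taxicab (fm m a) (fm n b)"
        using c1(5) c2(5) by (simp add: taxicab_def fm_def p_def q_def)
      then show ?thesis unfolding hx hy using G_tri[OF xC zC yC] dxz dzy by linarith
    next
      case far: False
      have a01: "fst a \<in> {0..1}" "snd a \<in> {0..1}" and b01: "fst b \<in> {0..1}" "snd b \<in> {0..1}"
        using aU bU by (auto simp: U_iff)
      have ge: "\<bar>real (fst m) - real (fst n)\<bar> \<ge> 2 \<or> \<bar>real (snd m) - real (snd n)\<bar> \<ge> 2"
      proof -
        have "\<bar>int (fst m) - int (fst n)\<bar> \<ge> 2 \<or> \<bar>int (snd m) - int (snd n)\<bar> \<ge> 2"
          using far by linarith
        then show ?thesis by linarith
      qed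
      have key: "\<bar>u\<bar> \<ge> 2 \<Longrightarrow> s \<in> {0..1} \<Longrightarrow> t \<in> {0..1} \<Longrightarrow> \<bar>(u + s - t) / 3\<bar> \<ge> 1/3" for u s t :: real
        by (auto simp: abs_if split: if_splits)
      have e1: "(real (fst m) + fst a) / 3 - (real (fst n) + fst b) / 3 = ((real (fst m) - real (fst n)) + fst a - fst b) / 3"
       and e2: "(real (snd m) + snd a) / 3 - (real (snd n) + snd b) / 3 = ((real (snd m) - real (snd n)) + snd a - snd b) / 3"
        by (simp_all add: field_simps)
      have tx: "taxicab (fm m a) (fm n b) = \<bar>((real (fst m) - real (fst n)) + fst a - fst b) / 3\<bar> + \<bar>((real (snd m) - real (snd n)) + snd a - snd b) / 3\<bar>"
        unfolding taxicab_def fm_def fst_conv snd_conv e1 e2 ..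
      have "taxicab (fm m a) (fm n b) \<ge> 1/3"
        using ge key[OF _ a01(1) b01(1)] key[OF _ a01(2) b01(2)] unfolding tx by fastforce
      moreover have "dst G x y \<le> 2" using G_le2 eta_in m n x'C y'C xd yd by auto
      ultimately show ?thesis using hx hy by simp
    qed
  qed
qed

lemma upper: "x \<in> carr G \<Longrightarrow> y \<in> carr G \<Longrightarrow> dst G x y \<le> 6 * taxicab (hr x) (hr y)"
proof -
  assume "x \<in> carr G" "y \<in> carr G"
  then obtain k l where "x \<in> Bk k" "y \<in> Bk l" using C_Bset by (auto simp: Bset_def)
  then have "x \<in> Bk (max k l)" "y \<in> Bk (max k l)" using Bk_mono[of k "max k l"] Bk_mono[of l "max k l"] by auto
  then show ?thesis by (rule upper_Bk)
qed

end

definition Phi :: "(real \<times> real) set \<Rightarrow> (real \<times> real) set" where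
  "Phi K = (\<Union>m\<in>Mset. (\<lambda>(x, y). ((real (fst m) + x) / 3, (real (snd m) + y) / 3)) ` K)"

lemma fm_lam: "(\<lambda>(x, y). ((real (fst m) + x) / 3, (real (snd m) + y) / 3)) = fm m"
  by (auto simp: fm_def fun_eq_iff)

lemma Phi_fm: "Phi K = (\<Union>m\<in>Mset. fm m ` K)"
  by (simp add: Phi_def fm_lam)

lemma fm_cont: "continuous_on S (fm m)"
  unfolding fm_def by (intro continuous_intros) auto

lemma U_compact: "compact U"
  unfolding U_def by (intro compact_Times compact_Icc)

lemma U_closed: "closed U"
  using U_compact compact_imp_closed by blast

definition carpet_prop :: "(real \<times> real) set \<Rightarrow> bool" where
  "carpet_prop K \<longleftrightarrow> K \<noteq> {} \<and> compact K \<and> K \<subseteq> {0..1} \<times> {0..1} \<and> K = Phi K"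

lemma carpet_def': "carpet = (THE K. carpet_prop K)"
  by (simp add: carpet_def carpet_prop_def Phi_def)

lemma carpet_approx:
  assumes K1: "carpet_prop K1" and K2: "carpet_prop K2"
  shows "\<forall>k\<in>K1. \<exists>k'\<in>K2. taxicab k k' \<le> 2 / 3 ^ n"
proof (induction n)
  case 0
  obtain k' where k': "k' \<in> K2" using K2 by (auto simp: carpet_prop_def)
  show ?case
  proof
    fix k assume "k \<in> K1"
    then have "k \<in> U" "k' \<in> U" using k' K1 K2 by (auto simp: carpet_prop_def U_def)
    then have "taxicab k k' \<le> 2" by (rule taxicab_U)
    then show "\<exists>k'\<in>K2. taxicab k k' \<le> 2 / 3 ^ 0" using k' by auto
  qed
next
  case (Suc n)
  show ?case
  proof
    fix k assume k: "k \<in> K1"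
    then have "k \<in> Phi K1" using K1 by (simp add: carpet_prop_def)
    then obtain m k1 where m: "m \<in> Mset" and k1: "k1 \<in> K1" and kk: "k = fm m k1" by (auto simp: Phi_fm)
    obtain k2 where k2: "k2 \<in> K2" and t: "taxicab k1 k2 \<le> 2 / 3 ^ n" using Suc.IH k1 by blast
    have "fm m k2 \<in> Phi K2" using m k2 by (auto simp: Phi_fm)
    then have "fm m k2 \<in> K2" using K2 by (simp add: carpet_prop_def)
    moreover have "taxicab k (fm m k2) \<le> 2 / 3 ^ Suc n" using t by (simp add: kk fm_taxicab)
    ultimately show "\<exists>k'\<in>K2. taxicab k k' \<le> 2 / 3 ^ Suc n" by blast
  qed
qed

lemma carpet_sub:
  assumes K1: "carpet_prop K1" and K2: "carpet_prop K2"
  shows "K1 \<subseteq> K2"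
proof
  fix k assume k: "k \<in> K1"
  have "k \<in> closure K2"
    unfolding closure_approachable
  proof (intro allI impI)
    fix e :: real assume e: "e > 0"
    obtain n where n: "2 / e < 3 ^ n" using real_arch_pow[of 3 "2 / e"] by auto
    then have "2 / 3 ^ n < e" using e by (simp add: field_simps)
    obtain k' where "k' \<in> K2" "taxicab k k' \<le> 2 / 3 ^ n" using carpet_approx[OF K1 K2] k by blast
    then show "\<exists>y\<in>K2. dist y k < e"
      using dist_le_taxicab[of k' k] taxicab_commute[of k k'] \<open>2 / 3 ^ n < e\<close> by (intro bexI[of _ k']) auto
  qed
  moreover have "closed K2" using K2 compact_imp_closed by (auto simp: carpet_prop_def)
  ultimately show "k \<in> K2" by (simp add: closure_closed)
qed

lemma carpet_eq: "carpet_prop K \<Longrightarrow> carpet = K"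
  unfolding carpet_def' by (rule the_equality) (assumption, meson carpet_sub subset_antisym)

context initG begin

definition D0 :: "(real \<times> real) set" where "D0 = hr ` carr G"

lemma D0_U: "D0 \<subseteq> U" unfolding D0_def using hr_U by blast

lemma M0_D0: "M0 \<subseteq> D0"
proof
  fix p assume "p \<in> M0"
  then have "p = hr (sqm G p)" "sqm G p \<in> carr G" using hr_S S_in by auto
  then show "p \<in> D0" by (auto simp: D0_def)
qed

lemma Phi_D0: "Phi D0 = D0"
proof
  show "Phi D0 \<subseteq> D0"
  proof
    fix y assume "y \<in> Phi D0"
    then obtain m x where m: "m \<in> Mset" and x: "x \<in> carr G" and y: "y = fm m (hr x)" unfolding Phi_fm D0_def by blast
    then have "y = hr (\<eta> (tcls G m x))" using hr_eta by simp
    then show "y \<in> D0" using eta_in[OF m x] unfolding D0_def by blast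
  qed
next
  show "D0 \<subseteq> Phi D0"
  proof
    fix y assume "y \<in> D0"
    then obtain x where x: "x \<in> carr G" and y: "y = hr x" unfolding D0_def by blast
    then obtain k where "x \<in> Bk k" using C_Bset unfolding Bset_def by blast
    then obtain m x' where m: "m \<in> Mset" and x': "x' \<in> Bk k" and xe: "x = \<eta> (tcls G m x')" using Bk_dec by blast
    have x'C: "x' \<in> carr G" using x' Bk_C by auto
    have "y = fm m (hr x')" using y xe hr_eta[OF m x'C] by simp
    then show "y \<in> Phi D0" using m x'C unfolding Phi_fm D0_def by blast
  qed
qed

definition K0 :: "(real \<times> real) set" where "K0 = closure D0"

lemma K0_U: "K0 \<subseteq> U"
  unfolding K0_def using D0_U U_closed by (rule closure_minimal)

lemma K0_compact: "compact K0"
  unfolding K0_def using compact_closure bounded_subset[OF compact_imp_bounded[OF U_compact] D0_U] by blast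

lemma Phi_closure: "Phi (closure S) = closure (Phi S)" if "bounded S" for S
proof
  have cS: "compact (closure S)" using that by simp
  have cP: "compact (Phi (closure S))"
    unfolding Phi_fm by (rule compact_UN[OF finite_Mset]) (rule compact_continuous_image[OF fm_cont cS])
  have "Phi S \<subseteq> Phi (closure S)" unfolding Phi_fm
    by (rule UN_mono[OF order_refl]) (rule image_mono[OF closure_subset])
  then show "closure (Phi S) \<subseteq> Phi (closure S)"
    by (rule closure_minimal) (rule compact_imp_closed[OF cP])
  show "Phi (closure S) \<subseteq> closure (Phi S)"
    unfolding Phi_fm[of "closure S"]
  proof (rule UN_least)
    fix m assume m: "m \<in> Mset"
    show "fm m ` closure S \<subseteq> closure (Phi S)"
    proof (rule image_closure_subset[OF fm_cont])
      show "closed (closure (Phi S))" by simp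
      have "fm m ` S \<subseteq> Phi S" unfolding Phi_fm using m by (rule UN_upper)
      then show "fm m ` S \<subseteq> closure (Phi S)" using closure_subset by (rule subset_trans)
    qed
  qed
qed

lemma K0_prop: "carpet_prop K0"
  unfolding carpet_prop_def
proof (intro conjI)
  have "(0,0) \<in> M0" by (simp add: M0_def)
  then show "K0 \<noteq> {}" using M0_D0 closure_subset[of D0] unfolding K0_def by blast
  show "compact K0" by (rule K0_compact)
  show "K0 \<subseteq> {0..1} \<times> {0..1}" using K0_U by (simp add: U_def)
  show "K0 = Phi K0"
    unfolding K0_def using Phi_closure[OF bounded_subset[OF compact_imp_bounded[OF U_compact] D0_U]] Phi_D0 by simp
qed

lemma carpet_K0: "carpet = K0"
  using carpet_eq[OF K0_prop] .

end

lemma taxicab_tendsto: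
  assumes "f \<longlonglongrightarrow> a" "g \<longlonglongrightarrow> b"
  shows "(\<lambda>n. taxicab (f n) (g n)) \<longlonglongrightarrow> taxicab a b"
  unfolding taxicab_def by (intro tendsto_intros assms)

context initG begin

abbreviation MC :: "(nat \<Rightarrow> 'a) \<Rightarrow> bool" where "MC \<equiv> Metric_space.MCauchy (carr G) (dst G)"

lemma MC_def': "MC \<sigma> \<longleftrightarrow> range \<sigma> \<subseteq> carr G \<and> (\<forall>\<epsilon>>0. \<exists>N. \<forall>n n'. N \<le> n \<longrightarrow> N \<le> n' \<longrightarrow> dst G (\<sigma> n) (\<sigma> n') < \<epsilon>)"
  using Metric_space.MCauchy_def[OF G_metric] by simp

lemma MC_in: "MC \<sigma> \<Longrightarrow> \<sigma> n \<in> carr G"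
  unfolding MC_def' by auto

lemma MC_D: "MC \<sigma> \<Longrightarrow> \<epsilon> > 0 \<Longrightarrow> \<exists>N. \<forall>n n'. N \<le> n \<longrightarrow> N \<le> n' \<longrightarrow> dst G (\<sigma> n) (\<sigma> n') < \<epsilon>"
  unfolding MC_def' by blast

lemma dst_commute: "dst G x y = dst G y x"
  using Metric_space.commute[OF G_metric] .

lemma dst_self: "x \<in> carr G \<Longrightarrow> dst G x x = 0"
  using Metric_space.zero[OF G_metric] by blast

lemma dst_zero: "x \<in> carr G \<Longrightarrow> y \<in> carr G \<Longrightarrow> dst G x y = 0 \<longleftrightarrow> x = y"
  using Metric_space.zero[OF G_metric] by blast

lemma hr_Cauchy: "MC \<sigma> \<Longrightarrow> Cauchy (\<lambda>n. hr (\<sigma> n))"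
proof (rule metric_CauchyI)
  fix e :: real assume MC: "MC \<sigma>" and e: "0 < e"
  obtain N where N: "\<forall>n n'. N \<le> n \<longrightarrow> N \<le> n' \<longrightarrow> dst G (\<sigma> n) (\<sigma> n') < e" using MC_D[OF MC e] by blast
  have "dist (hr (\<sigma> m)) (hr (\<sigma> n)) < e" if "m \<ge> N" "n \<ge> N" for m n
  proof -
    have "dist (hr (\<sigma> m)) (hr (\<sigma> n)) \<le> taxicab (hr (\<sigma> m)) (hr (\<sigma> n))" by (rule dist_le_taxicab)
    also have "\<dots> \<le> dst G (\<sigma> m) (\<sigma> n)" using hr_short MC_in[OF MC] by blast
    also have "\<dots> < e" using N that by blast
    finally show ?thesis .
  qed
  then show "\<exists>M. \<forall>m\<ge>M. \<forall>n\<ge>M. dist (hr (\<sigma> m)) (hr (\<sigma> n)) < e" by blast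
qed

lemma hr_lim: "MC \<sigma> \<Longrightarrow> (\<lambda>n. hr (\<sigma> n)) \<longlonglongrightarrow> lim (\<lambda>n. hr (\<sigma> n))"
  using hr_Cauchy Cauchy_convergent_iff convergent_LIMSEQ_iff by blast

lemma dseq_Cauchy:
  assumes x: "MC x" and y: "MC y"
  shows "Cauchy (\<lambda>n. dst G (x n) (y n))"
proof (rule metric_CauchyI)
  fix e :: real assume e: "0 < e"
  obtain N1 where N1: "\<forall>n n'. N1 \<le> n \<longrightarrow> N1 \<le> n' \<longrightarrow> dst G (x n) (x n') < e/2" using MC_D[OF x] e by (meson half_gt_zero)
  obtain N2 where N2: "\<forall>n n'. N2 \<le> n \<longrightarrow> N2 \<le> n' \<longrightarrow> dst G (y n) (y n') < e/2" using MC_D[OF y] e by (meson half_gt_zero)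
  have "dist (dst G (x m) (y m)) (dst G (x n) (y n)) < e" if "m \<ge> max N1 N2" "n \<ge> max N1 N2" for m n
  proof -
    have xm: "x m \<in> carr G" and xn: "x n \<in> carr G" and ym: "y m \<in> carr G" and yn: "y n \<in> carr G"
      using MC_in x y by auto
    have a: "dst G (x m) (x n) < e/2" "dst G (y m) (y n) < e/2" using N1 N2 that by auto
    have t1: "dst G (x m) (y m) \<le> dst G (x m) (x n) + dst G (x n) (y n) + dst G (y n) (y m)"
      using G_tri[OF xm xn ym] G_tri[OF xn yn ym] by linarith
    have t2: "dst G (x n) (y n) \<le> dst G (x n) (x m) + dst G (x m) (y m) + dst G (y m) (y n)"
      using G_tri[OF xn xm yn] G_tri[OF xm ym yn] by linarith
    show ?thesis using t1 t2 a dst_commute[of "x n" "x m"] dst_commute[of "y n" "y m"]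
      by (simp add: dist_real_def abs_less_iff)
  qed
  then show "\<exists>M. \<forall>m\<ge>M. \<forall>n\<ge>M. dist (dst G (x m) (y m)) (dst G (x n) (y n)) < e" by blast
qed

lemma dseq_lim: "MC x \<Longrightarrow> MC y \<Longrightarrow> (\<lambda>n. dst G (x n) (y n)) \<longlonglongrightarrow> lim (\<lambda>n. dst G (x n) (y n))"
  using dseq_Cauchy Cauchy_convergent_iff convergent_LIMSEQ_iff by blast

lemma equiv_ce: "equiv {x. MC x} (cauchy_eqv G)"
proof (rule equivI)
  show "cauchy_eqv G \<subseteq> {x. MC x} \<times> {x. MC x}" unfolding cauchy_eqv_def by auto
  show "refl_on {x. MC x} (cauchy_eqv G)"
    unfolding refl_on_def
  proof (intro ballI)
    fix x assume "x \<in> {x. MC x}"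
    then have "MC x" by simp
    moreover have "(\<lambda>n. dst G (x n) (x n)) = (\<lambda>n. 0)" using dst_self[OF MC_in[OF \<open>MC x\<close>]] by simp
    ultimately show "(x, x) \<in> cauchy_eqv G" unfolding cauchy_eqv_def by simp
  qed
  show "sym (cauchy_eqv G)"
    unfolding sym_def cauchy_eqv_def by (auto simp: dst_commute)
  show "trans (cauchy_eqv G)"
    unfolding trans_def
  proof (intro allI impI)
    fix x y z assume xy: "(x, y) \<in> cauchy_eqv G" and yz: "(y, z) \<in> cauchy_eqv G"
    then have c: "MC x" "MC y" "MC z" and l1: "(\<lambda>n. dst G (x n) (y n)) \<longlonglongrightarrow> 0" and l2: "(\<lambda>n. dst G (y n) (z n)) \<longlonglongrightarrow> 0"
      by (auto simp: cauchy_eqv_def)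
    have "(\<lambda>n. dst G (x n) (z n)) \<longlonglongrightarrow> 0"
    proof (rule tendsto_sandwich[of "\<lambda>n. 0" _ _ "\<lambda>n. dst G (x n) (y n) + dst G (y n) (z n)"])
      show "\<forall>\<^sub>F n in sequentially. 0 \<le> dst G (x n) (z n)" by (simp add: dst_nonneg)
      show "\<forall>\<^sub>F n in sequentially. dst G (x n) (z n) \<le> dst G (x n) (y n) + dst G (y n) (z n)"
        by (rule always_eventually, intro allI G_tri MC_in c)
      show "(\<lambda>n. 0::real) \<longlonglongrightarrow> 0" by simp
      show "(\<lambda>n. dst G (x n) (y n) + dst G (y n) (z n)) \<longlonglongrightarrow> 0" using tendsto_add[OF l1 l2] by simp
    qed
    then show "(x, z) \<in> cauchy_eqv G" using c by (auto simp: cauchy_eqv_def)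
  qed
qed

definition rep :: "(nat \<Rightarrow> 'a) set \<Rightarrow> nat \<Rightarrow> 'a" where "rep P = (SOME x. x \<in> P)"

lemma rep_props:
  assumes P: "P \<in> compl_carr G"
  shows "rep P \<in> P" "MC (rep P)" "P = cauchy_eqv G `` {rep P}"
proof -
  obtain x where x: "P = cauchy_eqv G `` {x}" "x \<in> {x. MC x}" using P unfolding compl_carr_def by (rule quotientE)
  have "x \<in> P" using x equiv_class_self[OF equiv_ce] by blast
  then show r: "rep P \<in> P" unfolding rep_def by (metis someI)
  then have xr: "(x, rep P) \<in> cauchy_eqv G" using x by simp
  then show "MC (rep P)" by (simp add: cauchy_eqv_def)
  show "P = cauchy_eqv G `` {rep P}" using x(1) xr equiv_class_eq_iff[OF equiv_ce] by metis
qed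

definition Fc :: "(nat \<Rightarrow> 'a) set \<Rightarrow> real \<times> real" where "Fc P = lim (\<lambda>n. hr (rep P n))"

lemma Fc_lim: "P \<in> compl_carr G \<Longrightarrow> (\<lambda>n. hr (rep P n)) \<longlonglongrightarrow> Fc P"
  unfolding Fc_def using hr_lim rep_props(2) by blast

lemma compl_dist_lim: "P \<in> compl_carr G \<Longrightarrow> Q \<in> compl_carr G \<Longrightarrow>
   (\<lambda>n. dst G (rep P n) (rep Q n)) \<longlonglongrightarrow> compl_dist G P Q"
  unfolding compl_dist_def rep_def[symmetric] using dseq_lim rep_props(2) by blast

lemma bounds:
  assumes P: "P \<in> compl_carr G" and Q: "Q \<in> compl_carr G"
  shows "taxicab (Fc P) (Fc Q) \<le> compl_dist G P Q" "compl_dist G P Q \<le> 6 * taxicab (Fc P) (Fc Q)"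
proof -
  have tl: "(\<lambda>n. taxicab (hr (rep P n)) (hr (rep Q n))) \<longlonglongrightarrow> taxicab (Fc P) (Fc Q)"
    by (rule taxicab_tendsto[OF Fc_lim[OF P] Fc_lim[OF Q]])
  have inC: "rep P n \<in> carr G" "rep Q n \<in> carr G" for n using MC_in rep_props(2) P Q by auto
  show "taxicab (Fc P) (Fc Q) \<le> compl_dist G P Q"
    by (rule LIMSEQ_le[OF tl compl_dist_lim[OF P Q]]) (use hr_short inC in blast)
  show "compl_dist G P Q \<le> 6 * taxicab (Fc P) (Fc Q)"
    by (rule LIMSEQ_le[OF compl_dist_lim[OF P Q] tendsto_mult_left[OF tl]]) (use upper inC in blast)
qed


lemma compl_dist_nonneg: "P \<in> compl_carr G \<Longrightarrow> Q \<in> compl_carr G \<Longrightarrow> 0 \<le> compl_dist G P Q"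
  by (rule LIMSEQ_le_const[OF compl_dist_lim]) (auto simp: dst_nonneg)

lemma Fc_in: "P \<in> compl_carr G \<Longrightarrow> Fc P \<in> K0"
proof -
  assume P: "P \<in> compl_carr G"
  have "\<forall>n. hr (rep P n) \<in> D0" using MC_in[OF rep_props(2)[OF P]] unfolding D0_def by blast
  then show ?thesis unfolding K0_def closure_sequential using Fc_lim[OF P]
    by (intro exI[of _ "\<lambda>n. hr (rep P n)"] conjI) auto
qed

lemma Fc_inj: "inj_on Fc (compl_carr G)"
proof (rule inj_onI)
  fix P Q assume P: "P \<in> compl_carr G" and Q: "Q \<in> compl_carr G" and e: "Fc P = Fc Q"
  have "compl_dist G P Q \<le> 0" using bounds(2)[OF P Q] e by (simp add: taxicab_def)
  then have "compl_dist G P Q = 0" using compl_dist_nonneg[OF P Q] by linarith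
  then have "(\<lambda>n. dst G (rep P n) (rep Q n)) \<longlonglongrightarrow> 0" using compl_dist_lim[OF P Q] by simp
  then have "(rep P, rep Q) \<in> cauchy_eqv G" using rep_props(2)[OF P] rep_props(2)[OF Q] by (simp add: cauchy_eqv_def)
  then show "P = Q" using rep_props(3)[OF P] rep_props(3)[OF Q] equiv_class_eq_iff[OF equiv_ce] by metis
qed

lemma Fc_surj: "K0 \<subseteq> Fc ` compl_carr G"
proof
  fix y assume "y \<in> K0"
  then obtain s where s: "\<forall>n. s n \<in> D0" and sy: "s \<longlonglongrightarrow> y" unfolding K0_def closure_sequential by blast
  have "\<forall>n. \<exists>z. z \<in> carr G \<and> s n = hr z" using s unfolding D0_def by blast
  then obtain x where x: "\<forall>n. x n \<in> carr G \<and> s n = hr (x n)" by (metis choice)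
  have MCx: "MC x"
    unfolding MC_def'
  proof (intro conjI allI impI)
    show "range x \<subseteq> carr G" using x by auto
    fix e :: real assume e: "e > 0"
    have "Cauchy s" using sy by (rule LIMSEQ_imp_Cauchy)
    then obtain M where M: "\<forall>m\<ge>M. \<forall>n\<ge>M. dist (s m) (s n) < e / 12"
      using metric_CauchyD[of s "e/12"] e by auto
    have "dst G (x m) (x n) < e" if "M \<le> m" "M \<le> n" for m n
    proof -
      have "dst G (x m) (x n) \<le> 6 * taxicab (s m) (s n)" using upper x by auto
      also have "\<dots> \<le> 12 * dist (s m) (s n)" using taxicab_le_dist[of "s m" "s n"] by linarith
      also have "\<dots> < e" using M that by fastforce
      finally show ?thesis .
    qed
    then show "\<exists>N. \<forall>n n'. N \<le> n \<longrightarrow> N \<le> n' \<longrightarrow> dst G (x n) (x n') < e" by blast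
  qed
  define P where "P = cauchy_eqv G `` {x}"
  have P: "P \<in> compl_carr G" unfolding P_def compl_carr_def using MCx by (intro quotientI) simp
  have "(x, rep P) \<in> cauchy_eqv G" using rep_props(1)[OF P] by (simp add: P_def)
  then have l0: "(\<lambda>n. dst G (x n) (rep P n)) \<longlonglongrightarrow> 0" by (simp add: cauchy_eqv_def)
  have "(\<lambda>n. hr (rep P n) - s n) \<longlonglongrightarrow> 0"
  proof (rule Lim_null_comparison[OF _ l0])
    have "norm (hr (rep P n) - s n) \<le> dst G (x n) (rep P n)" for n
    proof -
      have "norm (hr (rep P n) - s n) = dist (hr (rep P n)) (s n)" by (simp add: dist_norm)
      also have "\<dots> \<le> taxicab (hr (rep P n)) (hr (x n))" using dist_le_taxicab x by simp
      also have "\<dots> \<le> dst G (rep P n) (x n)" using hr_short MC_in[OF rep_props(2)[OF P]] x by blast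
      finally show ?thesis by (simp add: dst_commute)
    qed
    then show "\<forall>\<^sub>F n in sequentially. norm (hr (rep P n) - s n) \<le> dst G (x n) (rep P n)" by simp
  qed
  then have "(\<lambda>n. hr (rep P n)) \<longlonglongrightarrow> y" by (rule Lim_transform[OF sy])
  then have "Fc P = y" using Fc_lim[OF P] LIMSEQ_unique by blast
  then show "y \<in> Fc ` compl_carr G" using P by blast
qed

lemma Fc_bij: "bij_betw Fc (compl_carr G) carpet"
  unfolding bij_betw_def carpet_K0 using Fc_inj Fc_in Fc_surj by blast

lemma main_taxicab: "bilipschitz_equiv (compl_carr G) (compl_dist G) carpet taxicab"
  unfolding bilipschitz_equiv_def
proof (intro exI conjI ballI)
  show "bij_betw Fc (compl_carr G) carpet" by (rule Fc_bij)
  show "(1::real) \<le> 6" by simp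
  fix P Q assume P: "P \<in> compl_carr G" and Q: "Q \<in> compl_carr G"
  show "compl_dist G P Q / 6 \<le> taxicab (Fc P) (Fc Q)" using bounds[OF P Q] by simp
  show "taxicab (Fc P) (Fc Q) \<le> 6 * compl_dist G P Q" using bounds[OF P Q] compl_dist_nonneg[OF P Q] by simp
qed

lemma main_dist: "bilipschitz_equiv (compl_carr G) (compl_dist G) carpet dist"
  unfolding bilipschitz_equiv_def
proof (intro exI conjI ballI)
  show "bij_betw Fc (compl_carr G) carpet" by (rule Fc_bij)
  show "(1::real) \<le> 12" by simp
  fix P Q assume P: "P \<in> compl_carr G" and Q: "Q \<in> compl_carr G"
  show "compl_dist G P Q / 12 \<le> dist (Fc P) (Fc Q)"
    using bounds[OF P Q] taxicab_le_dist[of "Fc P" "Fc Q"] by simp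
  show "dist (Fc P) (Fc Q) \<le> 12 * compl_dist G P Q"
    using bounds[OF P Q] compl_dist_nonneg[OF P Q] dist_le_taxicab[of "Fc P" "Fc Q"] by simp
qed

end

theorem mainTheorem1:
  fixes G :: "'a squams" and \<eta> :: "((nat \<times> nat) \<times> 'a) set \<Rightarrow> 'a"
  assumes "is_initial_alg G \<eta>"
  shows "bilipschitz_equiv (carr (cauchy_completion G)) (dst (cauchy_completion G)) carpet taxicab \<and>
         bilipschitz_equiv (carr (cauchy_completion G)) (dst (cauchy_completion G)) carpet dist"
proof -
  interpret initG G \<eta> by unfold_locales (rule assms)
  have c: "carr (cauchy_completion G) = compl_carr G" "dst (cauchy_completion G) = compl_dist G"
    by (simp_all add: cauchy_completion_def carr_def dst_def)
  show ?thesis unfolding c using main_taxicab main_dist by blast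
qed


end
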